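(* Let $\mathbb{K}$ be an algebraically closed field of characteristic zero and $N=2m\ge 2$ even. Then $\operatorname{Der}(\mathcal{H}_{N}')\cong \mathcal{H}_{N}'\rtimes \mathfrak{h}\cong \mathcal{H}_{N}$.
   Context: Let $A_N=\mathbb{K}[t_1^{\pm1},\dots,t_N^{\pm1}]$, $d_i=t_i\frac{\partial}{\partial t_i}$, and $t^{\bm r}=t_1^{r_1}\cdots t_N^{r_N}$ for $\bm r\in\mathbb{Z}^N$. Let $(\cdot,\cdot)$ be the standard bilinear form on $\mathbb{K}^N$, $(e_i,e_j)=\delta_{ij}$. For $u\in\mathbb{K}^N$, $\bm r\in\mathbb{Z}^N$ put $D(u,\bm r)=\sum_i u_i t^{\bm r}d_i$. Let $\bm J=\begin{pmatrix} O_m & I_m\\ -I_m & O_m\end{pmatrix}$, $\overline{\bm r}=\bm J\bm r$, $h_{\bm r}=D(\overline{\bm r},\bm r)$ (so $h_{\bm 0}=0$), $\mathfrak h=\operatorname{span}_{\mathbb{K}}\{d_1,\dots,d_N\}$. The Hamiltonian Lie algebra is $\mathcal{H}_N=\operatorname{span}_{\mathbb{K}}\{h_{\bm r}:\bm r\ne\bm 0\}\oplus\mathfrak h$ with commutator bracket, $[h_{\bm r},h_{\bm s}]=(\overline{\bm r},\bm s)h_{\bm r+\bm s}$, $[D(u,\bm 0),h_{\bm r}]=(u,\bm r)h_{\bm r}$; its derived subalgebra is $\mathcal{H}_N'=\operatorname{span}_{\mathbb{K}}\{h_{\bm r}:\bm r\ne\bm 0\}$, an ideal, and $\mathfrak h$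 acts on it by the adjoint action. $\operatorname{Der}$ denotes the Lie algebra of derivations. *)

theory Defs
  imports "HOL-Computational_Algebra.Polynomial" "HOL-Library.FuncSet"
begin

definition alg_closed :: "'k::field itself \<Rightarrow> bool" where
  "alg_closed _ \<longleftrightarrow> (\<forall>p :: 'k poly. degree p > 0 \<longrightarrow> (\<exists>x. poly p x = 0))"

text \<open>Vectors of Z^N are functions nat => int vanishing at indices >= N.
  Coordinates are 0-based: index i corresponds to t_(i+1).\<close>

definition zvecs :: "nat \<Rightarrow> (nat \<Rightarrow> int) set" where
  "zvecs N = {r. \<forall>i\<ge>N. r i = 0}"

definition zero_vec :: "nat \<Rightarrow> int" where
  "zero_vec = (\<lambda>_. 0)"

definition vec_plus :: "(nat \<Rightarrow> int) \<Rightarrow> (nat \<Rightarrow> int) \<Rightarrow> (nat \<Rightarrow> int)" where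
  "vec_plus r s = (\<lambda>i. r i + s i)"

text \<open>symp m r s = (J r, s) with J = [[0, I_m], [-I_m, 0]], N = 2m.\<close>
definition symp :: "nat \<Rightarrow> (nat \<Rightarrow> int) \<Rightarrow> (nat \<Rightarrow> int) \<Rightarrow> int" where
  "symp m r s = (\<Sum>i<m. r (i + m) * s i - r i * s (i + m))"

section \<open>The derived algebra H_N' (coordinates w.r.t. the basis h_r, r ~= 0)\<close>

definition Hp_carrier :: "nat \<Rightarrow> ((nat \<Rightarrow> int) \<Rightarrow> 'k::field) set" where
  "Hp_carrier N = {f. finite {r. f r \<noteq> 0} \<and> (\<forall>r. f r \<noteq> 0 \<longrightarrow> r \<in> zvecs N \<and> r \<noteq> zero_vec)}"

definition vadd :: "('a \<Rightarrow> 'k::field) \<Rightarrow> ('a \<Rightarrow> 'k) \<Rightarrow> ('a \<Rightarrow> 'k)" where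
  "vadd f g = (\<lambda>r. f r + g r)"

definition vsmult :: "'k::field \<Rightarrow> ('a \<Rightarrow> 'k) \<Rightarrow> ('a \<Rightarrow> 'k)" where
  "vsmult c f = (\<lambda>r. c * f r)"

text \<open>Bilinear extension of [h_r, h_s] = (rbar, s) h_(r+s) (with h_0 = 0).\<close>
definition Hp_bracket :: "nat \<Rightarrow> ((nat \<Rightarrow> int) \<Rightarrow> 'k::field) \<Rightarrow> ((nat \<Rightarrow> int) \<Rightarrow> 'k) \<Rightarrow> ((nat \<Rightarrow> int) \<Rightarrow> 'k)" where
  "Hp_bracket m f g = (\<lambda>t. if t = zero_vec then 0 else
     (\<Sum>r\<in>{r. f r \<noteq> 0}. \<Sum>s\<in>{s. g s \<noteq> 0}.
        if vec_plus r s = t then of_int (symp m r s) * f r * g s else 0))"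

definition hvecs :: "nat \<Rightarrow> (nat \<Rightarrow> 'k::field) set" where
  "hvecs N = {u. \<forall>i\<ge>N. u i = 0}"

definition pairing :: "nat \<Rightarrow> (nat \<Rightarrow> 'k::field) \<Rightarrow> (nat \<Rightarrow> int) \<Rightarrow> 'k" where
  "pairing N u r = (\<Sum>i<N. u i * of_int (r i))"

text \<open>act N u = ad(D(u,0)) restricted to H_N': h_r |-> (u,r) h_r.\<close>
definition act :: "nat \<Rightarrow> (nat \<Rightarrow> 'k::field) \<Rightarrow> ((nat \<Rightarrow> int) \<Rightarrow> 'k) \<Rightarrow> ((nat \<Rightarrow> int) \<Rightarrow> 'k)" where
  "act N u f = (\<lambda>r. pairing N u r * f r)"

definition lie_iso ::
  "'a set \<Rightarrow> ('a \<Rightarrow> 'a \<Rightarrow> 'a) \<Rightarrow> ('k \<Rightarrow> 'a \<Rightarrow> 'a) \<Rightarrow> ('a \<Rightarrow> 'a \<Rightarrow> 'a) \<Rightarrow>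
   'b set \<Rightarrow> ('b \<Rightarrow> 'b \<Rightarrow> 'b) \<Rightarrow> ('k \<Rightarrow> 'b \<Rightarrow> 'b) \<Rightarrow> ('b \<Rightarrow> 'b \<Rightarrow> 'b) \<Rightarrow>
   ('a \<Rightarrow> 'b) \<Rightarrow> bool" where
  "lie_iso A addA smA brA B addB smB brB \<phi> \<longleftrightarrow>
     bij_betw \<phi> A B \<and>
     (\<forall>x\<in>A. \<forall>y\<in>A. \<phi> (addA x y) = addB (\<phi> x) (\<phi> y)) \<and>
     (\<forall>c. \<forall>x\<in>A. \<phi> (smA c x) = smB c (\<phi> x)) \<and>
     (\<forall>x\<in>A. \<forall>y\<in>A. \<phi> (brA x y) = brB (\<phi> x) (\<phi> y))"

definition Der_Hp :: "nat \<Rightarrow> (((nat \<Rightarrow> int) \<Rightarrow> 'k::field) \<Rightarrow> ((nat \<Rightarrow> int) \<Rightarrow> 'k)) set" where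
  "Der_Hp m = {D. D \<in> extensional (Hp_carrier (2*m)) \<and>
      (\<forall>x\<in>Hp_carrier (2*m). D x \<in> Hp_carrier (2*m)) \<and>
      (\<forall>x\<in>Hp_carrier (2*m). \<forall>y\<in>Hp_carrier (2*m). D (vadd x y) = vadd (D x) (D y)) \<and>
      (\<forall>c. \<forall>x\<in>Hp_carrier (2*m). D (vsmult c x) = vsmult c (D x)) \<and>
      (\<forall>x\<in>Hp_carrier (2*m). \<forall>y\<in>Hp_carrier (2*m).
          D (Hp_bracket m x y) = vadd (Hp_bracket m (D x) y) (Hp_bracket m x (D y)))}"

definition Der_add :: "nat \<Rightarrow> (((nat \<Rightarrow> int) \<Rightarrow> 'k::field) \<Rightarrow> ((nat \<Rightarrow> int) \<Rightarrow> 'k)) \<Rightarrow> _ \<Rightarrow> _" where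
  "Der_add m D E = restrict (\<lambda>x. vadd (D x) (E x)) (Hp_carrier (2*m))"

definition Der_smult :: "nat \<Rightarrow> 'k::field \<Rightarrow> (((nat \<Rightarrow> int) \<Rightarrow> 'k) \<Rightarrow> ((nat \<Rightarrow> int) \<Rightarrow> 'k)) \<Rightarrow> _" where
  "Der_smult m c D = restrict (\<lambda>x. vsmult c (D x)) (Hp_carrier (2*m))"

definition Der_bracket :: "nat \<Rightarrow> (((nat \<Rightarrow> int) \<Rightarrow> 'k::field) \<Rightarrow> ((nat \<Rightarrow> int) \<Rightarrow> 'k)) \<Rightarrow> _ \<Rightarrow> _" where
  "Der_bracket m D E = restrict (\<lambda>x. vadd (D (E x)) (vsmult (-1) (E (D x)))) (Hp_carrier (2*m))"

definition pair_add :: "(('a \<Rightarrow> 'k::field) \<times> ('b \<Rightarrow> 'k)) \<Rightarrow> _ \<Rightarrow> _" where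
  "pair_add p q = (vadd (fst p) (fst q), vadd (snd p) (snd q))"

definition pair_smult :: "'k::field \<Rightarrow> (('a \<Rightarrow> 'k) \<times> ('b \<Rightarrow> 'k)) \<Rightarrow> _" where
  "pair_smult c p = (vsmult c (fst p), vsmult c (snd p))"

definition semidirect_bracket ::
  "('x \<Rightarrow> 'x \<Rightarrow> 'x) \<Rightarrow> ('u \<Rightarrow> 'u \<Rightarrow> 'u) \<Rightarrow> ('u \<Rightarrow> 'x \<Rightarrow> 'x) \<Rightarrow>
   ('x \<Rightarrow> 'x \<Rightarrow> 'x) \<Rightarrow> ('x \<Rightarrow> 'x) \<Rightarrow> ('x \<times> 'u) \<Rightarrow> ('x \<times> 'u) \<Rightarrow> ('x \<times> 'u)" where
  "semidirect_bracket brL brH rho addL negL p q =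
     (addL (addL (brL (fst p) (fst q)) (rho (snd p) (fst q))) (negL (rho (snd q) (fst p))),
      brH (snd p) (snd q))"

definition SD_carrier :: "nat \<Rightarrow> (((nat \<Rightarrow> int) \<Rightarrow> 'k::field) \<times> (nat \<Rightarrow> 'k)) set" where
  "SD_carrier m = Hp_carrier (2*m) \<times> hvecs (2*m)"

definition SD_bracket :: "nat \<Rightarrow> (((nat \<Rightarrow> int) \<Rightarrow> 'k::field) \<times> (nat \<Rightarrow> 'k)) \<Rightarrow> _ \<Rightarrow> _" where
  "SD_bracket m = semidirect_bracket (Hp_bracket m) (\<lambda>u v. (\<lambda>_. 0)) (act (2*m)) vadd (vsmult (-1))"

text \<open>An element is a pair (f, u) standing for sum_r f(r) h_r + D(u,0).
  Bracket: bilinear extension of [h_r,h_s] = (rbar,s) h_(r+s),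
  [D(u,0),h_r] = (u,r) h_r, [D(u,0),D(v,0)] = 0.\<close>

definition Ham_carrier :: "nat \<Rightarrow> (((nat \<Rightarrow> int) \<Rightarrow> 'k::field) \<times> (nat \<Rightarrow> 'k)) set" where
  "Ham_carrier m = Hp_carrier (2*m) \<times> hvecs (2*m)"

definition Ham_bracket :: "nat \<Rightarrow> (((nat \<Rightarrow> int) \<Rightarrow> 'k::field) \<times> (nat \<Rightarrow> 'k)) \<Rightarrow> _ \<Rightarrow> _" where
  "Ham_bracket m p q =
     (\<lambda>r. Hp_bracket m (fst p) (fst q) r + pairing (2*m) (snd p) r * fst q r
           - pairing (2*m) (snd q) r * fst p r,
      \<lambda>_. 0)"

end

theory Submission
  imports Defs
begin

definition uvec :: "nat \<Rightarrow> nat \<Rightarrow> int" where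
  "uvec j = (\<lambda>k. if k = j then 1 else 0)"

definition dl :: "nat \<Rightarrow> (nat \<Rightarrow> int) \<Rightarrow> ((nat \<Rightarrow> int) \<Rightarrow> 'k::field)" where
  "dl m r = (\<lambda>t. if t = r \<and> r \<in> zvecs (2*m) \<and> r \<noteq> zero_vec then 1 else 0)"

definition vneg :: "(nat \<Rightarrow> int) \<Rightarrow> (nat \<Rightarrow> int)" where
  "vneg r = (\<lambda>i. - r i)"

definition vscale :: "int \<Rightarrow> (nat \<Rightarrow> int) \<Rightarrow> (nat \<Rightarrow> int)" where
  "vscale k r = (\<lambda>i. k * r i)"

lemma vec_plus_comm: "vec_plus a b = vec_plus b a"
  by (simp add: vec_plus_def add.commute)

lemma vec_plus_assoc: "vec_plus (vec_plus a b) c = vec_plus a (vec_plus b c)"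
  by (simp add: vec_plus_def add.assoc)

lemma vec_plus_zero[simp]: "vec_plus a zero_vec = a" "vec_plus zero_vec a = a"
  by (simp_all add: vec_plus_def zero_vec_def)

lemma vec_plus_cancel[simp]: "vec_plus a s = vec_plus b s \<longleftrightarrow> a = b"
  by (auto simp: vec_plus_def fun_eq_iff)

lemma vec_plus_cancel2[simp]: "vec_plus s a = vec_plus s b \<longleftrightarrow> a = b"
  by (auto simp: vec_plus_def fun_eq_iff)

lemma vec_plus_eq_self[simp]: "vec_plus a r = r \<longleftrightarrow> a = zero_vec"
  by (auto simp: vec_plus_def fun_eq_iff zero_vec_def)

lemma zvecs_plus[intro]: "a \<in> zvecs N \<Longrightarrow> b \<in> zvecs N \<Longrightarrow> vec_plus a b \<in> zvecs N"
  by (simp add: zvecs_def vec_plus_def)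

lemma zvecs_zero[simp]: "zero_vec \<in> zvecs N"
  by (simp add: zvecs_def zero_vec_def)

lemma zvecs_neg[intro]: "a \<in> zvecs N \<Longrightarrow> vneg a \<in> zvecs N"
  by (simp add: zvecs_def vneg_def)

lemma zvecs_scale[intro]: "a \<in> zvecs N \<Longrightarrow> vscale k a \<in> zvecs N"
  by (simp add: zvecs_def vscale_def)

lemma zvecs_uvec[intro]: "j < N \<Longrightarrow> uvec j \<in> zvecs N"
  by (simp add: zvecs_def uvec_def)

lemma uvec_nz[simp]: "uvec j \<noteq> zero_vec"
  by (auto simp: uvec_def zero_vec_def fun_eq_iff)

lemma zvecs_plus_rev: "vec_plus a b \<in> zvecs N \<Longrightarrow> b \<in> zvecs N \<Longrightarrow> a \<in> zvecs N"
  by (simp add: zvecs_def vec_plus_def)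

lemma vec_plus_neg: "vec_plus (vec_plus s (vneg r)) r = s"
  by (simp add: vec_plus_def vneg_def)

lemma vec_plus_neg2: "vec_plus r (vneg r) = zero_vec"
  by (simp add: vec_plus_def vneg_def zero_vec_def)

lemma symp_add_left: "symp m (vec_plus a b) c = symp m a c + symp m b c"
  by (simp add: symp_def vec_plus_def sum.distrib[symmetric] algebra_simps)

lemma symp_add_right: "symp m c (vec_plus a b) = symp m c a + symp m c b"
  by (simp add: symp_def vec_plus_def sum.distrib[symmetric] algebra_simps)

lemma symp_antisym: "symp m b a = - symp m a b"
  by (simp add: symp_def sum_negf[symmetric] algebra_simps)

lemma symp_self[simp]: "symp m a a = 0"
  using symp_antisym[of m a a] by simp

lemma symp_zero[simp]: "symp m zero_vec a = 0" "symp m a zero_vec = 0"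
  by (simp_all add: symp_def zero_vec_def)

lemma symp_scale_right: "symp m a (vscale k b) = k * symp m a b"
  by (simp add: symp_def vscale_def sum_distrib_left algebra_simps)

lemma symp_scale_left: "symp m (vscale k b) a = k * symp m b a"
  by (simp add: symp_def vscale_def sum_distrib_left algebra_simps)

lemma symp_sum_zero: "vec_plus a b = zero_vec \<Longrightarrow> symp m a b = 0"
proof -
  assume "vec_plus a b = zero_vec"
  then have "\<forall>i. a i + b i = 0" by (auto simp: vec_plus_def zero_vec_def fun_eq_iff)
  then have "b = vneg a" by (auto simp: vneg_def fun_eq_iff eq_neg_iff_add_eq_0 add.commute)
  then show ?thesis by (simp add: symp_def vneg_def)
qed

lemma symp_uvec_low: "j < m \<Longrightarrow> symp m a (uvec j) = a (j + m)"
proof -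
  assume j: "j < m"
  have "symp m a (uvec j) = (\<Sum>i<m. if i = j then a (i + m) else 0)"
    unfolding symp_def uvec_def using j by (intro sum.cong) auto
  also have "\<dots> = a (j + m)" using j by simp
  finally show ?thesis .
qed

lemma symp_uvec_high: "j < m \<Longrightarrow> symp m a (uvec (j + m)) = - a j"
proof -
  assume j: "j < m"
  have "symp m a (uvec (j+m)) = (\<Sum>i<m. if i = j then - a i else 0)"
    unfolding symp_def uvec_def by (rule sum.cong) auto
  also have "\<dots> = - a j" using j by simp
  finally show ?thesis .
qed

lemma exists_symp_uvec:
  assumes "a \<in> zvecs (2*m)" "a \<noteq> zero_vec"
  shows "\<exists>j<2*m. symp m a (uvec j) \<noteq> 0"
proof -
  obtain i where i: "a i \<noteq> 0" using assms(2) by (auto simp: zero_vec_def fun_eq_iff)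
  then have "i < 2*m" using assms(1) by (auto simp: zvecs_def) (meson not_le)
  show ?thesis
  proof (cases "i < m")
    case True
    then show ?thesis using symp_uvec_high[of i m a] i by (intro exI[of _ "i+m"]) auto
  next
    case False
    then obtain j where j: "i = j + m" "j < m" using \<open>i < 2*m\<close>
      by (metis add.commute le_add_diff_inverse mult_2 nat_add_left_cancel_less not_less)
    then show ?thesis using symp_uvec_low[of j m a] i by (intro exI[of _ j]) auto
  qed
qed

lemma symp_nz_imp: "symp m a b \<noteq> 0 \<Longrightarrow> a \<noteq> zero_vec \<and> b \<noteq> zero_vec \<and> vec_plus a b \<noteq> zero_vec"
  using symp_sum_zero by auto

lemma pairing_add: "pairing N u (vec_plus r s) = pairing N u r + pairing N u s"
  by (simp add: pairing_def vec_plus_def sum.distrib[symmetric] algebra_simps)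

lemma pairing_uvec: "i < N \<Longrightarrow> pairing N u (uvec i) = u i"
proof -
  assume i: "i < N"
  have "pairing N u (uvec i) = (\<Sum>k<N. if k = i then u k else 0)"
    unfolding pairing_def uvec_def by (rule sum.cong) auto
  also have "\<dots> = u i" using i by simp
  finally show ?thesis .
qed

lemma pairing_zero[simp]: "pairing N u zero_vec = 0" "pairing N (\<lambda>_. 0) r = 0"
  by (simp_all add: pairing_def zero_vec_def)


lemma Hp_zero[simp]: "(\<lambda>_. 0) \<in> Hp_carrier N"
  by (simp add: Hp_carrier_def)

lemma Hp_finite: "f \<in> Hp_carrier N \<Longrightarrow> finite {r. f r \<noteq> 0}"
  by (simp add: Hp_carrier_def)

lemma Hp_at_zero[simp]: "f \<in> Hp_carrier N \<Longrightarrow> f zero_vec = 0"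
  by (auto simp: Hp_carrier_def)

lemma Hp_outside: "f \<in> Hp_carrier N \<Longrightarrow> r \<notin> zvecs N \<Longrightarrow> f r = 0"
  by (auto simp: Hp_carrier_def)

lemma Hp_supp: "f \<in> Hp_carrier N \<Longrightarrow> f r \<noteq> 0 \<Longrightarrow> r \<in> zvecs N \<and> r \<noteq> zero_vec"
  unfolding Hp_carrier_def by blast

lemma Hp_intro: "finite {r. f r \<noteq> 0} \<Longrightarrow> (\<And>r. f r \<noteq> 0 \<Longrightarrow> r \<in> zvecs N \<and> r \<noteq> zero_vec) \<Longrightarrow> f \<in> Hp_carrier N"
  unfolding Hp_carrier_def by blast

lemma Hp_vadd[intro]: "f \<in> Hp_carrier N \<Longrightarrow> g \<in> Hp_carrier N \<Longrightarrow> vadd f g \<in> Hp_carrier N"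
proof -
  assume f: "f \<in> Hp_carrier N" and g: "g \<in> Hp_carrier N"
  have "{r. vadd f g r \<noteq> 0} \<subseteq> {r. f r \<noteq> 0} \<union> {r. g r \<noteq> 0}" by (auto simp: vadd_def)
  then have "finite {r. vadd f g r \<noteq> 0}" using Hp_finite[OF f] Hp_finite[OF g]
    by (meson finite_Un finite_subset)
  moreover have "r \<in> zvecs N \<and> r \<noteq> zero_vec" if "vadd f g r \<noteq> 0" for r
  proof -
    have "f r \<noteq> 0 \<or> g r \<noteq> 0" using that by (auto simp: vadd_def)
    then show ?thesis using Hp_supp[OF f] Hp_supp[OF g] by blast
  qed
  ultimately show ?thesis by (rule Hp_intro)
qed

lemma Hp_vsmult[intro]: "f \<in> Hp_carrier N \<Longrightarrow> vsmult c f \<in> Hp_carrier N"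
proof -
  assume f: "f \<in> Hp_carrier N"
  have "{r. vsmult c f r \<noteq> 0} \<subseteq> {r. f r \<noteq> 0}" by (auto simp: vsmult_def)
  then have "finite {r. vsmult c f r \<noteq> 0}" using finite_subset Hp_finite[OF f] by blast
  moreover have "r \<in> zvecs N \<and> r \<noteq> zero_vec" if "vsmult c f r \<noteq> 0" for r
  proof -
    have "f r \<noteq> 0" using that by (auto simp: vsmult_def)
    then show ?thesis using Hp_supp[OF f] by blast
  qed
  ultimately show ?thesis by (rule Hp_intro)
qed

lemma Hp_dl[intro,simp]: "(dl m r :: (nat \<Rightarrow> int) \<Rightarrow> 'k::field) \<in> Hp_carrier (2*m)"
proof -
  have "{t. (dl m r t :: 'k) \<noteq> 0} \<subseteq> {r}" by (auto simp: dl_def)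
  then have "finite {t. (dl m r t :: 'k) \<noteq> 0}" by (meson finite.intros finite_subset)
  moreover have "\<forall>t. (dl m r t :: 'k) \<noteq> 0 \<longrightarrow> t \<in> zvecs (2*m) \<and> t \<noteq> zero_vec"
    by (simp add: dl_def)
  ultimately show ?thesis unfolding Hp_carrier_def mem_Collect_eq by (rule conjI)
qed

lemma vsmult_zero_fun[simp]: "vsmult 0 f = (\<lambda>_. 0)"
  by (simp add: vsmult_def)

lemma dl_bad: "r \<notin> zvecs (2*m) \<or> r = zero_vec \<Longrightarrow> dl m r = (\<lambda>_. 0)"
  by (auto simp: dl_def fun_eq_iff)

lemma Hp_bracket_alt:
  assumes "finite A" "finite B" "{r. f r \<noteq> 0} \<subseteq> A" "{s. g s \<noteq> 0} \<subseteq> B"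
  shows "Hp_bracket m f g t = (if t = zero_vec then 0 else
     (\<Sum>r\<in>A. \<Sum>s\<in>B. if vec_plus r s = t then of_int (symp m r s) * f r * g s else 0))"
proof -
  let ?G = "\<lambda>r s. if vec_plus r s = t then of_int (symp m r s) * f r * g s else 0"
  have fA: "finite {r. f r \<noteq> 0}" "finite {s. g s \<noteq> 0}"
    using assms by (auto intro: finite_subset)
  have inner: "(\<Sum>s\<in>{s. g s \<noteq> 0}. ?G r s) = (\<Sum>s\<in>B. ?G r s)" for r
    using assms by (intro sum.mono_neutral_left) auto
  have z: "(\<Sum>s\<in>B. ?G r s) = 0" if "f r = 0" for r
    using that by (intro sum.neutral) simp
  have outer: "(\<Sum>r\<in>{r. f r \<noteq> 0}. \<Sum>s\<in>B. ?G r s) = (\<Sum>r\<in>A. \<Sum>s\<in>B. ?G r s)"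
    using assms z by (intro sum.mono_neutral_left) auto
  show ?thesis unfolding Hp_bracket_def using inner outer by simp
qed

lemma Hp_bracket_antisym: "Hp_bracket m g f = vsmult (-1) (Hp_bracket m f g)"
proof -
  have "Hp_bracket m g f t = - Hp_bracket m f g t" for t
  proof -
    have "(\<Sum>r\<in>{r. g r \<noteq> 0}. \<Sum>s\<in>{s. f s \<noteq> 0}.
        if vec_plus r s = t then of_int (symp m r s) * g r * f s else 0)
      = (\<Sum>s\<in>{s. f s \<noteq> 0}. \<Sum>r\<in>{r. g r \<noteq> 0}.
        if vec_plus r s = t then of_int (symp m r s) * g r * f s else 0)"
      by (rule sum.swap)
    also have "\<dots> = (\<Sum>s\<in>{s. f s \<noteq> 0}. \<Sum>r\<in>{r. g r \<noteq> 0}.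
        - (if vec_plus s r = t then of_int (symp m s r) * f s * g r else 0))"
    proof -
      have "(if vec_plus r s = t then of_int (symp m r s) * g r * f s else 0) =
          - (if vec_plus s r = t then of_int (symp m s r) * f s * g r else 0)" for r s
        by (simp add: vec_plus_comm[of r s] symp_antisym[of m r s])
      then show ?thesis by simp
    qed
    finally show ?thesis unfolding Hp_bracket_def by (simp add: sum_negf)
  qed
  then show ?thesis by (simp add: vsmult_def fun_eq_iff)
qed

lemma Hp_bracket_add_left:
  assumes "f \<in> Hp_carrier N" "f' \<in> Hp_carrier N" "g \<in> Hp_carrier N"
  shows "Hp_bracket m (vadd f f') g = vadd (Hp_bracket m f g) (Hp_bracket m f' g)"
proof -
  let ?A = "{r. f r \<noteq> 0} \<union> {r. f' r \<noteq> 0}" and ?B = "{s. g s \<noteq> 0}"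
  have fin: "finite ?A" "finite ?B" using assms by (auto dest: Hp_finite)
  show ?thesis
    apply (simp add: fun_eq_iff vadd_def)
    apply (subst (1 2 3) Hp_bracket_alt[where A = ?A and B = ?B])
    using fin by (auto simp: vadd_def sum.distrib[symmetric] algebra_simps intro!: sum.cong)
qed

lemma Hp_bracket_smult_left:
  assumes "f \<in> Hp_carrier N" "g \<in> Hp_carrier N"
  shows "Hp_bracket m (vsmult c f) g = vsmult c (Hp_bracket m f g)"
proof -
  let ?A = "{r. f r \<noteq> 0}" and ?B = "{s. g s \<noteq> 0}"
  have fin: "finite ?A" "finite ?B" using assms by (auto dest: Hp_finite)
  show ?thesis
    apply (simp add: fun_eq_iff vsmult_def)
    apply (subst (1 2) Hp_bracket_alt[where A = ?A and B = ?B])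
    using fin by (auto simp: vsmult_def sum_distrib_left algebra_simps intro!: sum.cong)
qed

lemma Hp_bracket_add_right:
  assumes "f \<in> Hp_carrier N" "g \<in> Hp_carrier N" "g' \<in> Hp_carrier N"
  shows "Hp_bracket m f (vadd g g') = vadd (Hp_bracket m f g) (Hp_bracket m f g')"
proof -
  have e: "Hp_bracket m f h = vsmult (-1) (Hp_bracket m h f)" for h
    by (rule Hp_bracket_antisym)
  show ?thesis unfolding e Hp_bracket_add_left[OF assms(2,3,1), of m]
    by (simp add: vsmult_def vadd_def fun_eq_iff algebra_simps)
qed

lemma Hp_bracket_smult_right:
  assumes "f \<in> Hp_carrier N" "g \<in> Hp_carrier N"
  shows "Hp_bracket m f (vsmult c g) = vsmult c (Hp_bracket m f g)"
proof -
  have e: "Hp_bracket m f h = vsmult (-1) (Hp_bracket m h f)" for h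
    by (rule Hp_bracket_antisym)
  show ?thesis unfolding e Hp_bracket_smult_left[OF assms(2,1), of m c]
    by (simp add: vsmult_def fun_eq_iff algebra_simps)
qed

lemma Hp_bracket_closed[intro]:
  assumes "f \<in> Hp_carrier N" "g \<in> Hp_carrier N"
  shows "Hp_bracket m f g \<in> Hp_carrier N"
proof -
  let ?A = "{r. f r \<noteq> 0}" and ?B = "{s. g s \<noteq> 0}"
  have fin: "finite ?A" "finite ?B" using assms by (auto dest: Hp_finite)
  have sub: "{t. Hp_bracket m f g t \<noteq> 0} \<subseteq> (\<lambda>(r,s). vec_plus r s) ` (?A \<times> ?B)"
  proof
    fix t assume "t \<in> {t. Hp_bracket m f g t \<noteq> 0}"
    then have "(\<Sum>r\<in>?A. \<Sum>s\<in>?B. if vec_plus r s = t then of_int (symp m r s) * f r * g s else 0) \<noteq> 0"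
      by (simp add: Hp_bracket_def split: if_splits)
    then obtain r where r: "r \<in> ?A" and h1:
      "(\<Sum>s\<in>?B. if vec_plus r s = t then of_int (symp m r s) * f r * g s else 0) \<noteq> 0"
      by (rule sum.not_neutral_contains_not_neutral)
    from h1 obtain s where "s \<in> ?B" and
      "(if vec_plus r s = t then of_int (symp m r s) * f r * g s else 0) \<noteq> 0"
      by (rule sum.not_neutral_contains_not_neutral)
    then have "s \<in> ?B" "vec_plus r s = t" by (auto split: if_splits)
    with r show "t \<in> (\<lambda>(r,s). vec_plus r s) ` (?A \<times> ?B)" by force
  qed
  have "finite {t. Hp_bracket m f g t \<noteq> 0}"
    using fin by (intro finite_subset[OF sub]) auto
  moreover have "t \<in> zvecs N \<and> t \<noteq> zero_vec" if "Hp_bracket m f g t \<noteq> 0" for t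
  proof -
    have "t \<in> (\<lambda>(r,s). vec_plus r s) ` (?A \<times> ?B)" using sub that by auto
    then obtain r s where "r \<in> ?A" "s \<in> ?B" "t = vec_plus r s" by auto
    then have "t \<in> zvecs N" using assms by (auto simp: Hp_carrier_def)
    moreover have "t \<noteq> zero_vec" using that by (auto simp: Hp_bracket_def)
    ultimately show ?thesis by simp
  qed
  ultimately show ?thesis by (auto simp: Hp_carrier_def)
qed

lemma Hp_bracket_dl_right:
  assumes "f \<in> Hp_carrier (2*m)" "s \<in> zvecs (2*m)"
  shows "Hp_bracket m f (dl m s) (vec_plus a s) = of_int (symp m a s) * f a"
proof (cases "s = zero_vec")
  case True
  then show ?thesis by (simp add: Hp_bracket_def dl_bad)
next
  case False
  show ?thesis
  proof (cases "vec_plus a s = zero_vec")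
    case True
    then show ?thesis by (simp add: Hp_bracket_def symp_sum_zero)
  next
    case nz: False
    have fin: "finite {r. f r \<noteq> 0}" using assms by (auto dest: Hp_finite)
    have "Hp_bracket m f (dl m s) (vec_plus a s) = (\<Sum>r\<in>{r. f r \<noteq> 0} \<union> {a}. \<Sum>s'\<in>{s}.
       if vec_plus r s' = vec_plus a s then of_int (symp m r s') * f r * dl m s s' else 0)"
      using nz fin False assms by (subst Hp_bracket_alt[where A = "{r. f r \<noteq> 0} \<union> {a}" and B = "{s}"])
        (auto simp: dl_def)
    also have "\<dots> = (\<Sum>r\<in>{r. f r \<noteq> 0} \<union> {a}. if r = a then of_int (symp m a s) * f a else 0)"
      using False assms by (intro sum.cong refl) (auto simp: dl_def)
    also have "\<dots> = of_int (symp m a s) * f a" using fin by simp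
    finally show ?thesis .
  qed
qed

lemma Hp_bracket_dl_left:
  assumes "g \<in> Hp_carrier (2*m)" "r \<in> zvecs (2*m)"
  shows "Hp_bracket m (dl m r) g (vec_plus r b) = of_int (symp m r b) * g b"
proof -
  have "Hp_bracket m (dl m r) g (vec_plus r b) = - Hp_bracket m g (dl m r) (vec_plus b r)"
    by (subst Hp_bracket_antisym) (simp add: vsmult_def vec_plus_comm)
  also have "\<dots> = of_int (symp m r b) * g b"
    using Hp_bracket_dl_right[OF assms, of b] by (simp add: symp_antisym[of m b])
  finally show ?thesis .
qed

lemma Hp_bracket_dl_dl:
  assumes "r \<in> zvecs (2*m)" "s \<in> zvecs (2*m)"
  shows "Hp_bracket m (dl m r) (dl m s) = vsmult (of_int (symp m r s)) (dl m (vec_plus r s))"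
proof
  fix t
  show "Hp_bracket m (dl m r) (dl m s) t = vsmult (of_int (symp m r s)) (dl m (vec_plus r s)) t"
  proof (cases "\<exists>a. t = vec_plus a s")
    case True
    then obtain a where a: "t = vec_plus a s" by auto
    show ?thesis using assms unfolding a Hp_bracket_dl_right[OF Hp_dl assms(2)]
      by (auto simp: vsmult_def dl_def symp_sum_zero)
  next
    case False
    then have False by (metis vec_plus_neg)
    then show ?thesis ..
  qed
qed


section \<open>Extension from the basis\<close>

lemma carrier_induct:
  fixes P :: "((nat \<Rightarrow> int) \<Rightarrow> 'k::field) \<Rightarrow> bool"
  assumes "y \<in> Hp_carrier (2*m)" "P (\<lambda>_. 0)"
    "\<And>y r c. y \<in> Hp_carrier (2*m) \<Longrightarrow> r \<in> zvecs (2*m) \<Longrightarrow> r \<noteq> zero_vec \<Longrightarrow> P y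
       \<Longrightarrow> P (vadd y (vsmult c (dl m r)))"
  shows "P y"
proof -
  have "\<forall>y. y \<in> Hp_carrier (2*m) \<longrightarrow> {r. y r \<noteq> 0} = S \<longrightarrow> P y" if "finite S" for S
    using that
  proof (induction S rule: finite_induct)
    case empty
    show ?case
    proof (intro allI impI)
      fix y :: "(nat \<Rightarrow> int) \<Rightarrow> 'k" assume "{r. y r \<noteq> 0} = {}"
      then have "y = (\<lambda>_. 0)" by (auto simp: fun_eq_iff)
      then show "P y" using assms(2) by simp
    qed
  next
    case (insert a S)
    show ?case
    proof (intro allI impI)
      fix y :: "(nat \<Rightarrow> int) \<Rightarrow> 'k"
      assume y: "y \<in> Hp_carrier (2*m)" and sy: "{r. y r \<noteq> 0} = insert a S"
      let ?y' = "y(a := 0)"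
      have s': "{r. ?y' r \<noteq> 0} = S" using sy insert.hyps(2) by auto
      have ya: "y a \<noteq> 0" using sy by auto
      have y': "?y' \<in> Hp_carrier (2*m)"
      proof (rule Hp_intro)
        show "finite {r. ?y' r \<noteq> 0}" using s' insert.hyps(1) by simp
        fix r assume "?y' r \<noteq> 0"
        then have "y r \<noteq> 0" by (auto split: if_splits)
        then show "r \<in> zvecs (2*m) \<and> r \<noteq> zero_vec" using Hp_supp[OF y] by blast
      qed
      have a: "a \<in> zvecs (2*m)" "a \<noteq> zero_vec" using Hp_supp[OF y ya] by auto
      have "y t = vadd ?y' (vsmult (y a) (dl m a)) t" for t
        using a by (cases "t = a") (simp_all add: vadd_def vsmult_def dl_def)
      then have "y = vadd ?y' (vsmult (y a) (dl m a))" by (rule ext)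
      moreover have "P ?y'" using insert.IH y' s' by blast
      ultimately show "P y" using assms(3)[OF y' a] by metis
    qed
  qed
  then show ?thesis using assms(1) Hp_finite[OF assms(1)] by blast
qed

definition lin :: "nat \<Rightarrow> (((nat \<Rightarrow> int) \<Rightarrow> 'k::field) \<Rightarrow> ((nat \<Rightarrow> int) \<Rightarrow> 'k)) \<Rightarrow> bool" where
  "lin m F \<longleftrightarrow> (\<forall>x\<in>Hp_carrier (2*m). \<forall>y\<in>Hp_carrier (2*m). F (vadd x y) = vadd (F x) (F y)) \<and>
     (\<forall>c. \<forall>x\<in>Hp_carrier (2*m). F (vsmult c x) = vsmult c (F x))"

lemma lin_zero: "lin m F \<Longrightarrow> F (\<lambda>_. 0) = (\<lambda>_. 0)"
proof -
  assume "lin m F"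
  then have "F (vsmult 0 (\<lambda>_. 0)) = vsmult 0 (F (\<lambda>_. 0))" unfolding lin_def using Hp_zero by blast
  then show ?thesis by simp
qed

lemma lin_ext:
  assumes "lin m F" "lin m G"
    "\<And>r. r \<in> zvecs (2*m) \<Longrightarrow> r \<noteq> zero_vec \<Longrightarrow> F (dl m r) = G (dl m r)"
    "x \<in> Hp_carrier (2*m)"
  shows "F x = G x"
proof (rule carrier_induct[of x m "\<lambda>x. F x = G x"])
  show "x \<in> Hp_carrier (2*m)" by fact
  show "F (\<lambda>_. 0) = G (\<lambda>_. 0)" using lin_zero[OF assms(1)] lin_zero[OF assms(2)] by simp
next
  fix y r c assume 2: "y \<in> Hp_carrier (2*m)" "r \<in> zvecs (2*m)" "r \<noteq> zero_vec" "F y = G y"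
  have "F (vadd y (vsmult c (dl m r))) = vadd (F y) (vsmult c (F (dl m r)))"
    using assms(1) 2 unfolding lin_def by (metis Hp_dl Hp_vsmult)
  moreover have "G (vadd y (vsmult c (dl m r))) = vadd (G y) (vsmult c (G (dl m r)))"
    using assms(2) 2 unfolding lin_def by (metis Hp_dl Hp_vsmult)
  ultimately show "F (vadd y (vsmult c (dl m r))) = G (vadd y (vsmult c (dl m r)))"
    using 2 assms(3) by simp
qed

lemma bilin_ext:
  assumes "\<And>y. y \<in> Hp_carrier (2*m) \<Longrightarrow> lin m (\<lambda>x. F x y)"
    "\<And>x. x \<in> Hp_carrier (2*m) \<Longrightarrow> lin m (F x)"
    "\<And>y. y \<in> Hp_carrier (2*m) \<Longrightarrow> lin m (\<lambda>x. G x y)"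
    "\<And>x. x \<in> Hp_carrier (2*m) \<Longrightarrow> lin m (G x)"
    "\<And>r s. r \<in> zvecs (2*m) \<Longrightarrow> r \<noteq> zero_vec \<Longrightarrow> s \<in> zvecs (2*m) \<Longrightarrow> s \<noteq> zero_vec
       \<Longrightarrow> F (dl m r) (dl m s) = G (dl m r) (dl m s)"
    "x \<in> Hp_carrier (2*m)" "y \<in> Hp_carrier (2*m)"
  shows "F x y = G x y"
proof -
  have b: "F x (dl m s) = G x (dl m s)" if "s \<in> zvecs (2*m)" "s \<noteq> zero_vec" for s
    using assms(1)[OF Hp_dl] assms(3)[OF Hp_dl] assms(5)[OF _ _ that] assms(6)
    by (rule lin_ext)
  show ?thesis using assms(2)[OF assms(6)] assms(4)[OF assms(6)] b assms(7) by (rule lin_ext)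
qed

lemma lin_bracket_left: "y \<in> Hp_carrier (2*m) \<Longrightarrow> lin m (\<lambda>x. Hp_bracket m x y)"
  unfolding lin_def by (simp add: Hp_bracket_add_left Hp_bracket_smult_left)

lemma lin_bracket_right: "x \<in> Hp_carrier (2*m) \<Longrightarrow> lin m (Hp_bracket m x)"
  unfolding lin_def by (simp add: Hp_bracket_add_right Hp_bracket_smult_right)

lemma act_closed[intro]: "f \<in> Hp_carrier N \<Longrightarrow> act N' u f \<in> Hp_carrier N"
proof -
  assume f: "f \<in> Hp_carrier N"
  have "{r. act N' u f r \<noteq> 0} \<subseteq> {r. f r \<noteq> 0}" by (auto simp: act_def)
  then have "finite {r. act N' u f r \<noteq> 0}" using finite_subset Hp_finite[OF f] by blast
  moreover have "r \<in> zvecs N \<and> r \<noteq> zero_vec" if "act N' u f r \<noteq> 0" for r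
  proof -
    have "f r \<noteq> 0" using that by (auto simp: act_def)
    then show ?thesis using Hp_supp[OF f] by blast
  qed
  ultimately show ?thesis by (rule Hp_intro)
qed

lemma lin_act: "lin m (act N u)"
  unfolding lin_def by (simp add: act_def vadd_def vsmult_def fun_eq_iff algebra_simps)

lemma lin_comp:
  fixes F G :: "((nat \<Rightarrow> int) \<Rightarrow> 'k::field) \<Rightarrow> ((nat \<Rightarrow> int) \<Rightarrow> 'k)"
  assumes F: "lin m F" and G: "lin m G" and cl: "\<And>x. x \<in> Hp_carrier (2*m) \<Longrightarrow> G x \<in> Hp_carrier (2*m)"
  shows "lin m (\<lambda>x. F (G x))"
  unfolding lin_def
proof (intro conjI ballI allI)
  fix x y :: "(nat \<Rightarrow> int) \<Rightarrow> 'k" assume x: "x \<in> Hp_carrier (2*m)" and y: "y \<in> Hp_carrier (2*m)"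
  have "G (vadd x y) = vadd (G x) (G y)" using G x y unfolding lin_def by blast
  moreover have "F (vadd (G x) (G y)) = vadd (F (G x)) (F (G y))"
    using F cl[OF x] cl[OF y] unfolding lin_def by blast
  ultimately show "F (G (vadd x y)) = vadd (F (G x)) (F (G y))" by simp
next
  fix c :: 'k and x :: "(nat \<Rightarrow> int) \<Rightarrow> 'k" assume x: "x \<in> Hp_carrier (2*m)"
  have "G (vsmult c x) = vsmult c (G x)" using G x unfolding lin_def by blast
  moreover have "F (vsmult c (G x)) = vsmult c (F (G x))"
    using F cl[OF x] unfolding lin_def by blast
  ultimately show "F (G (vsmult c x)) = vsmult c (F (G x))" by simp
qed

lemma lin_vadd: "lin m F \<Longrightarrow> lin m G \<Longrightarrow> lin m (\<lambda>x. vadd (F x) (G x))"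
  unfolding lin_def by (simp add: vadd_def vsmult_def fun_eq_iff algebra_simps)

lemma lin_vsmult: "lin m F \<Longrightarrow> lin m (\<lambda>x. vsmult c (F x))"
  unfolding lin_def by (simp add: vadd_def vsmult_def fun_eq_iff algebra_simps)

lemma vec_plus_left_commute: "vec_plus a (vec_plus b c) = vec_plus b (vec_plus a c)"
  by (simp add: vec_plus_def algebra_simps)

lemma symp_jacobi:
  "symp m s t * symp m r (vec_plus s t) =
   symp m r s * symp m (vec_plus r s) t + symp m r t * symp m s (vec_plus r t)"
  by (simp add: symp_add_left symp_add_right symp_antisym[of m r s] algebra_simps)

lemma lin_brk_comp_left:
  assumes "z \<in> Hp_carrier (2*m)" "lin m G" "\<And>x. x \<in> Hp_carrier (2*m) \<Longrightarrow> G x \<in> Hp_carrier (2*m)"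
  shows "lin m (\<lambda>x. Hp_bracket m (G x) z)"
  by (rule lin_comp[OF lin_bracket_left[OF assms(1)] assms(2,3)])

lemma lin_brk_comp_right:
  assumes "y \<in> Hp_carrier (2*m)" "lin m G" "\<And>x. x \<in> Hp_carrier (2*m) \<Longrightarrow> G x \<in> Hp_carrier (2*m)"
  shows "lin m (\<lambda>x. Hp_bracket m y (G x))"
  by (rule lin_comp[OF lin_bracket_right[OF assms(1)] assms(2,3)])

lemma Hp_jacobi_basis:
  assumes r: "r \<in> zvecs (2*m)" and st: "s \<in> zvecs (2*m)" "t \<in> zvecs (2*m)"
  shows "Hp_bracket m (dl m r) (Hp_bracket m (dl m s) (dl m t)) =
    (vadd (Hp_bracket m (Hp_bracket m (dl m r) (dl m s)) (dl m t))
      (Hp_bracket m (dl m s) (Hp_bracket m (dl m r) (dl m t))) :: (nat \<Rightarrow> int) \<Rightarrow> 'k::field)"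
proof -
  have z: "vec_plus s t \<in> zvecs (2*m)" "vec_plus r s \<in> zvecs (2*m)" "vec_plus r t \<in> zvecs (2*m)"
    using r st by auto
  have e1: "vec_plus (vec_plus r s) t = vec_plus r (vec_plus s t)" by (rule vec_plus_assoc)
  have e2: "vec_plus s (vec_plus r t) = vec_plus r (vec_plus s t)" by (rule vec_plus_left_commute)
  define D :: "(nat \<Rightarrow> int) \<Rightarrow> 'k" where "D = dl m (vec_plus r (vec_plus s t))"
  have l: "Hp_bracket m (dl m r) (Hp_bracket m (dl m s) (dl m t)) =
     vsmult (of_int (symp m s t)) (vsmult (of_int (symp m r (vec_plus s t))) D)"
    unfolding D_def using r st z
    by (simp add: Hp_bracket_dl_dl Hp_bracket_smult_right[OF Hp_dl Hp_dl])
  have r1: "Hp_bracket m (Hp_bracket m (dl m r) (dl m s)) (dl m t) =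
     vsmult (of_int (symp m r s)) (vsmult (of_int (symp m (vec_plus r s) t)) D)"
    unfolding D_def using r st z
    by (simp add: Hp_bracket_dl_dl Hp_bracket_smult_left[OF Hp_dl Hp_dl] e1)
  have r2: "Hp_bracket m (dl m s) (Hp_bracket m (dl m r) (dl m t)) =
     vsmult (of_int (symp m r t)) (vsmult (of_int (symp m s (vec_plus r t))) D)"
    unfolding D_def using r st z
    by (simp add: Hp_bracket_dl_dl Hp_bracket_smult_right[OF Hp_dl Hp_dl] e2)
  have J: "(of_int (symp m s t) * of_int (symp m r (vec_plus s t)) :: 'k) =
     of_int (symp m r s) * of_int (symp m (vec_plus r s) t) + of_int (symp m r t) * of_int (symp m s (vec_plus r t))"
    using arg_cong[OF symp_jacobi[of m s t r], of "of_int :: int \<Rightarrow> 'k"] by simp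
  have "vsmult (of_int (symp m s t)) (vsmult (of_int (symp m r (vec_plus s t))) D) x =
    vadd (vsmult (of_int (symp m r s)) (vsmult (of_int (symp m (vec_plus r s) t)) D))
         (vsmult (of_int (symp m r t)) (vsmult (of_int (symp m s (vec_plus r t))) D)) x" for x
  proof -
    have "(of_int (symp m s t) * of_int (symp m r (vec_plus s t))) * D x =
       (of_int (symp m r s) * of_int (symp m (vec_plus r s) t) + of_int (symp m r t) * of_int (symp m s (vec_plus r t))) * D x"
      using J by simp
    then show ?thesis by (simp add: vadd_def vsmult_def algebra_simps)
  qed
  then show ?thesis unfolding l r1 r2 by (rule ext)
qed

lemma Hp_jacobi:
  assumes "x \<in> Hp_carrier (2*m)" "y \<in> Hp_carrier (2*m)" "z \<in> Hp_carrier (2*m)"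
  shows "Hp_bracket m x (Hp_bracket m y z) =
    vadd (Hp_bracket m (Hp_bracket m x y) z) (Hp_bracket m y (Hp_bracket m x z))"
proof -
  have basis: "Hp_bracket m x (Hp_bracket m (dl m s) (dl m t)) =
    vadd (Hp_bracket m (Hp_bracket m x (dl m s)) (dl m t)) (Hp_bracket m (dl m s) (Hp_bracket m x (dl m t)))"
    if x: "x \<in> Hp_carrier (2*m)" and st: "s \<in> zvecs (2*m)" "t \<in> zvecs (2*m)" for x s t
  proof (rule lin_ext[OF _ _ _ x])
    show "lin m (\<lambda>x. Hp_bracket m x (Hp_bracket m (dl m s) (dl m t)))"
      by (rule lin_bracket_left) (intro Hp_bracket_closed Hp_dl)
    show "lin m (\<lambda>x. vadd (Hp_bracket m (Hp_bracket m x (dl m s)) (dl m t))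
       (Hp_bracket m (dl m s) (Hp_bracket m x (dl m t))))"
      by (rule lin_vadd[OF lin_brk_comp_left[OF Hp_dl lin_bracket_left[OF Hp_dl]]
            lin_brk_comp_right[OF Hp_dl lin_bracket_left[OF Hp_dl]]])
        (auto intro: Hp_bracket_closed)
    show "Hp_bracket m (dl m r) (Hp_bracket m (dl m s) (dl m t)) =
      vadd (Hp_bracket m (Hp_bracket m (dl m r) (dl m s)) (dl m t)) (Hp_bracket m (dl m s) (Hp_bracket m (dl m r) (dl m t)))"
      if "r \<in> zvecs (2*m)" "r \<noteq> zero_vec" for r
      using Hp_jacobi_basis[OF that(1) st] .
  qed
  show ?thesis
  proof (rule bilin_ext[where F = "\<lambda>y z. Hp_bracket m x (Hp_bracket m y z)"
      and G = "\<lambda>y z. vadd (Hp_bracket m (Hp_bracket m x y) z) (Hp_bracket m y (Hp_bracket m x z))"])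
    show "lin m (\<lambda>y. Hp_bracket m x (Hp_bracket m y z))" if "z \<in> Hp_carrier (2*m)" for z
      by (rule lin_brk_comp_right[OF assms(1) lin_bracket_left[OF that]]) (auto intro: that)
    show "lin m (\<lambda>z. Hp_bracket m x (Hp_bracket m y z))" if "y \<in> Hp_carrier (2*m)" for y
      by (rule lin_brk_comp_right[OF assms(1) lin_bracket_right[OF that]]) (auto intro: that)
    show "lin m (\<lambda>y. vadd (Hp_bracket m (Hp_bracket m x y) z) (Hp_bracket m y (Hp_bracket m x z)))"
      if "z \<in> Hp_carrier (2*m)" for z
      by (rule lin_vadd[OF lin_brk_comp_left[OF that lin_bracket_right[OF assms(1)]]
            lin_bracket_left]) (auto intro: that assms(1))
    show "lin m (\<lambda>z. vadd (Hp_bracket m (Hp_bracket m x y) z) (Hp_bracket m y (Hp_bracket m x z)))"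
      if "y \<in> Hp_carrier (2*m)" for y
      by (rule lin_vadd[OF lin_bracket_right lin_brk_comp_right[OF that lin_bracket_right[OF assms(1)]]])
        (auto intro: that assms(1))
  qed (use assms basis in auto)
qed


lemma act_dl: "act N u (dl m r) = vsmult (pairing N u r) (dl m r)"
proof (rule ext)
  fix t show "act N u (dl m r) t = vsmult (pairing N u r) (dl m r) t"
    by (cases "t = r") (simp_all add: act_def vsmult_def dl_def)
qed

lemma dl_at: "r \<in> zvecs (2*m) \<Longrightarrow> r \<noteq> zero_vec \<Longrightarrow>
  dl m r (vec_plus a r) = (if a = zero_vec then 1 else 0)"
  by (simp add: dl_def)

lemma act_vsmult: "act N u (vsmult c f) = vsmult c (act N u f)"
  by (simp add: act_def vsmult_def fun_eq_iff algebra_simps)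

lemma act_vadd: "act N u (vadd f g) = vadd (act N u f) (act N u g)"
  by (simp add: act_def vadd_def fun_eq_iff algebra_simps)

lemma act_deriv:
  assumes "x \<in> Hp_carrier (2*m)" "y \<in> Hp_carrier (2*m)"
  shows "act (2*m) u (Hp_bracket m x y) =
    vadd (Hp_bracket m (act (2*m) u x) y) (Hp_bracket m x (act (2*m) u y))"
proof (rule bilin_ext[where F = "\<lambda>x y. act (2*m) u (Hp_bracket m x y)"
      and G = "\<lambda>x y. vadd (Hp_bracket m (act (2*m) u x) y) (Hp_bracket m x (act (2*m) u y))", OF _ _ _ _ _ assms])
  show "lin m (\<lambda>x. act (2*m) u (Hp_bracket m x y))" if "y \<in> Hp_carrier (2*m)" for y
    by (rule lin_comp[OF lin_act lin_bracket_left[OF that]]) (auto intro: that)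
  show "lin m (\<lambda>y. act (2*m) u (Hp_bracket m x y))" if "x \<in> Hp_carrier (2*m)" for x
    by (rule lin_comp[OF lin_act lin_bracket_right[OF that]]) (auto intro: that)
  show "lin m (\<lambda>x. vadd (Hp_bracket m (act (2*m) u x) y) (Hp_bracket m x (act (2*m) u y)))"
    if "y \<in> Hp_carrier (2*m)" for y
    by (rule lin_vadd[OF lin_brk_comp_left[OF that lin_act] lin_bracket_left]) (auto intro: that)
  show "lin m (\<lambda>y. vadd (Hp_bracket m (act (2*m) u x) y) (Hp_bracket m x (act (2*m) u y)))"
    if "x \<in> Hp_carrier (2*m)" for x
    by (rule lin_vadd[OF lin_bracket_right lin_brk_comp_right[OF that lin_act]]) (auto intro: that)
  fix r s assume r: "r \<in> zvecs (2*m)" and s: "s \<in> zvecs (2*m)"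
  have rs: "vec_plus r s \<in> zvecs (2*m)" using r s by auto
  have l: "act (2*m) u (Hp_bracket m (dl m r) (dl m s)) =
     vsmult (of_int (symp m r s)) (vsmult (pairing (2*m) u (vec_plus r s)) (dl m (vec_plus r s)))"
    using r s by (simp add: Hp_bracket_dl_dl act_vsmult act_dl)
  have rr: "vadd (Hp_bracket m (act (2*m) u (dl m r)) (dl m s)) (Hp_bracket m (dl m r) (act (2*m) u (dl m s))) =
     vadd (vsmult (pairing (2*m) u r) (vsmult (of_int (symp m r s)) (dl m (vec_plus r s))))
          (vsmult (pairing (2*m) u s) (vsmult (of_int (symp m r s)) (dl m (vec_plus r s))))"
    using r s by (simp add: act_dl Hp_bracket_smult_left[OF Hp_dl Hp_dl] Hp_bracket_smult_right[OF Hp_dl Hp_dl]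
        Hp_bracket_dl_dl)
  show "act (2*m) u (Hp_bracket m (dl m r) (dl m s)) =
     vadd (Hp_bracket m (act (2*m) u (dl m r)) (dl m s)) (Hp_bracket m (dl m r) (act (2*m) u (dl m s)))"
    unfolding l rr by (simp add: vadd_def vsmult_def fun_eq_iff pairing_add algebra_simps)
qed

section \<open>The map from the semidirect product to derivations\<close>

definition Phi :: "nat \<Rightarrow> (((nat \<Rightarrow> int) \<Rightarrow> 'k::field) \<times> (nat \<Rightarrow> 'k)) \<Rightarrow>
    (((nat \<Rightarrow> int) \<Rightarrow> 'k) \<Rightarrow> ((nat \<Rightarrow> int) \<Rightarrow> 'k))" where
  "Phi m p = restrict (\<lambda>y. vadd (Hp_bracket m (fst p) y) (act (2*m) (snd p) y)) (Hp_carrier (2*m))"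

lemma Phi_apply: "y \<in> Hp_carrier (2*m) \<Longrightarrow> Phi m p y = vadd (Hp_bracket m (fst p) y) (act (2*m) (snd p) y)"
  by (simp add: Phi_def)

lemma Phi_closed: "fst p \<in> Hp_carrier (2*m) \<Longrightarrow> y \<in> Hp_carrier (2*m) \<Longrightarrow> Phi m p y \<in> Hp_carrier (2*m)"
  by (auto simp: Phi_apply)

lemma lin_Phi: "fst p \<in> Hp_carrier (2*m) \<Longrightarrow> lin m (Phi m p)"
proof -
  assume x: "fst p \<in> Hp_carrier (2*m)"
  have "lin m (\<lambda>y. vadd (Hp_bracket m (fst p) y) (act (2*m) (snd p) y))"
    by (rule lin_vadd[OF lin_bracket_right[OF x] lin_act])
  then show ?thesis unfolding lin_def by (simp add: Phi_apply Hp_vadd Hp_vsmult)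
qed

lemma Phi_in_Der:
  assumes p: "p \<in> SD_carrier m"
  shows "Phi m p \<in> Der_Hp m"
proof -
  obtain x u where pxu: "p = (x, u)" by (cases p)
  have x: "x \<in> Hp_carrier (2*m)" using p pxu by (simp add: SD_carrier_def)
  have L: "lin m (Phi m p)" using lin_Phi[of p m] x pxu by simp
  have leib: "Phi m p (Hp_bracket m y z) = vadd (Hp_bracket m (Phi m p y) z) (Hp_bracket m y (Phi m p z))"
    if y: "y \<in> Hp_carrier (2*m)" and z: "z \<in> Hp_carrier (2*m)" for y z
  proof -
    have yz: "Hp_bracket m y z \<in> Hp_carrier (2*m)" using y z by auto
    have "Phi m p (Hp_bracket m y z) = vadd (Hp_bracket m x (Hp_bracket m y z)) (act (2*m) u (Hp_bracket m y z))"
      using yz pxu by (simp add: Phi_apply)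
    also have "\<dots> = vadd (vadd (Hp_bracket m (Hp_bracket m x y) z) (Hp_bracket m y (Hp_bracket m x z)))
         (vadd (Hp_bracket m (act (2*m) u y) z) (Hp_bracket m y (act (2*m) u z)))"
      using Hp_jacobi[OF x y z] act_deriv[OF y z] by simp
    also have "\<dots> = vadd (Hp_bracket m (vadd (Hp_bracket m x y) (act (2*m) u y)) z)
         (Hp_bracket m y (vadd (Hp_bracket m x z) (act (2*m) u z)))"
      using x y z by (simp add: Hp_bracket_add_left[of _ "2*m"] Hp_bracket_add_right[of _ "2*m"] Hp_bracket_closed act_closed)
        (simp add: vadd_def fun_eq_iff algebra_simps)
    also have "\<dots> = vadd (Hp_bracket m (Phi m p y) z) (Hp_bracket m y (Phi m p z))"
      using y z pxu by (simp add: Phi_apply)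
    finally show ?thesis .
  qed
  show ?thesis unfolding Der_Hp_def
    using L leib Phi_closed[of p m] x pxu unfolding lin_def by (auto simp: Phi_def)
qed

lemma Phi_eval:
  assumes "fst p \<in> Hp_carrier (2*m)" "r \<in> zvecs (2*m)" "r \<noteq> zero_vec"
  shows "Phi m p (dl m r) (vec_plus a r) = of_int (symp m a r) * fst p a +
     (if a = zero_vec then pairing (2*m) (snd p) r else 0)"
proof -
  have "Phi m p (dl m r) = vadd (Hp_bracket m (fst p) (dl m r)) (act (2*m) (snd p) (dl m r))"
    by (rule Phi_apply[OF Hp_dl])
  then show ?thesis
    using assms by (simp add: vadd_def Hp_bracket_dl_right act_def dl_at)
qed


lemma pairing_vadd: "pairing N (vadd u v) r = pairing N u r + pairing N v r"
  by (simp add: pairing_def vadd_def sum.distrib[symmetric] algebra_simps)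

lemma pairing_vsmult: "pairing N (vsmult c u) r = c * pairing N u r"
  by (simp add: pairing_def vsmult_def sum_distrib_left algebra_simps)

lemma pairing_vadd': "pairing N (\<lambda>r. u r + v r) r = pairing N u r + pairing N v r"
  using pairing_vadd[of N u v r] by (simp add: vadd_def)

lemma pairing_vsmult': "pairing N (\<lambda>r. c * u r) r = c * pairing N u r"
  using pairing_vsmult[of N c u r] by (simp add: vsmult_def)

lemma Phi_add:
  assumes "p \<in> SD_carrier m" "q \<in> SD_carrier m"
  shows "Phi m (pair_add p q) = Der_add m (Phi m p) (Phi m q)"
proof (rule ext)
  fix y
  show "Phi m (pair_add p q) y = Der_add m (Phi m p) (Phi m q) y"
  proof (cases "y \<in> Hp_carrier (2*m)")
    case True
    have "Hp_bracket m (vadd (fst p) (fst q)) y = vadd (Hp_bracket m (fst p) y) (Hp_bracket m (fst q) y)"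
      using assms True by (intro Hp_bracket_add_left) (auto simp: SD_carrier_def)
    then show ?thesis using True
      by (simp add: Phi_apply Der_add_def pair_add_def vadd_def act_def pairing_vadd' fun_eq_iff algebra_simps)
  next
    case False
    then show ?thesis by (simp add: Phi_def Der_add_def)
  qed
qed

lemma Phi_smult:
  assumes "p \<in> SD_carrier m"
  shows "Phi m (pair_smult c p) = Der_smult m c (Phi m p)"
proof (rule ext)
  fix y
  show "Phi m (pair_smult c p) y = Der_smult m c (Phi m p) y"
  proof (cases "y \<in> Hp_carrier (2*m)")
    case True
    have "Hp_bracket m (vsmult c (fst p)) y = vsmult c (Hp_bracket m (fst p) y)"
      using assms True by (intro Hp_bracket_smult_left) (auto simp: SD_carrier_def)
    then show ?thesis using True
      by (simp add: Phi_apply Der_smult_def pair_smult_def vadd_def vsmult_def act_def pairing_vsmult'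
          fun_eq_iff algebra_simps)
  next
    case False
    then show ?thesis by (simp add: Phi_def Der_smult_def)
  qed
qed

lemma Phi_bracket:
  assumes p: "p \<in> SD_carrier m" and q: "q \<in> SD_carrier m"
  shows "Phi m (SD_bracket m p q) = Der_bracket m (Phi m p) (Phi m q)"
proof (rule ext)
  fix y
  obtain x u where pxu: "p = (x, u)" by (cases p)
  obtain x' u' where qxu: "q = (x', u')" by (cases q)
  have x: "x \<in> Hp_carrier (2*m)" and x': "x' \<in> Hp_carrier (2*m)"
    using p q pxu qxu by (auto simp: SD_carrier_def)
  let ?W = "vadd (vadd (Hp_bracket m x x') (act (2*m) u x')) (vsmult (-1) (act (2*m) u' x))"
  have W: "?W \<in> Hp_carrier (2*m)" using x x' by auto
  have SD: "SD_bracket m p q = (?W, \<lambda>_. 0)"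
    by (simp add: SD_bracket_def semidirect_bracket_def pxu qxu)
  show "Phi m (SD_bracket m p q) y = Der_bracket m (Phi m p) (Phi m q) y"
  proof (cases "y \<in> Hp_carrier (2*m)")
    case False
    then show ?thesis by (simp add: Phi_def Der_bracket_def)
  next
    case y: True
    have Py: "Phi m p y = vadd (Hp_bracket m x y) (act (2*m) u y)" using y pxu by (simp add: Phi_apply)
    have Qy: "Phi m q y = vadd (Hp_bracket m x' y) (act (2*m) u' y)" using y qxu by (simp add: Phi_apply)
    have Py': "Phi m p y \<in> Hp_carrier (2*m)" and Qy': "Phi m q y \<in> Hp_carrier (2*m)"
      using Py Qy x x' y by auto
    have PQ: "Phi m p (Phi m q y) = vadd (Hp_bracket m x (Phi m q y)) (act (2*m) u (Phi m q y))"
      using Qy' pxu by (simp add: Phi_apply)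
    have QP: "Phi m q (Phi m p y) = vadd (Hp_bracket m x' (Phi m p y)) (act (2*m) u' (Phi m p y))"
      using Py' qxu by (simp add: Phi_apply)
    have L: "Phi m (SD_bracket m p q) y = vadd (Hp_bracket m ?W y) (act (2*m) (\<lambda>_. 0) y)"
      using y SD by (simp add: Phi_apply)
    have RB: "Der_bracket m (Phi m p) (Phi m q) y =
       vadd (Phi m p (Phi m q y)) (vsmult (-1) (Phi m q (Phi m p y)))"
      using y by (simp add: Der_bracket_def)
    have xy: "Hp_bracket m x y \<in> Hp_carrier (2*m)" "Hp_bracket m x' y \<in> Hp_carrier (2*m)"
      "act (2*m) u y \<in> Hp_carrier (2*m)" "act (2*m) u' y \<in> Hp_carrier (2*m)"
      "act (2*m) u x' \<in> Hp_carrier (2*m)" "act (2*m) u' x \<in> Hp_carrier (2*m)"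
      "Hp_bracket m x x' \<in> Hp_carrier (2*m)"
      using x x' y by auto
    have W1: "Hp_bracket m ?W y = vadd (vadd (Hp_bracket m (Hp_bracket m x x') y) (Hp_bracket m (act (2*m) u x') y))
       (vsmult (-1) (Hp_bracket m (act (2*m) u' x) y))"
      by (simp only: Hp_bracket_add_left[OF Hp_vadd[OF xy(7) xy(5)] Hp_vsmult[OF xy(6)] y, of m]
        Hp_bracket_add_left[OF xy(7) xy(5) y, of m] Hp_bracket_smult_left[OF xy(6) y, of m "-1"])
    show ?thesis
    proof (rule ext)
    fix t
    have e1: "Hp_bracket m x (Hp_bracket m x' y) t =
      Hp_bracket m (Hp_bracket m x x') y t + Hp_bracket m x' (Hp_bracket m x y) t"
      using Hp_jacobi[OF x x' y] by (simp add: vadd_def)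
    have e2: "act (2*m) u' (Hp_bracket m x y) t =
      Hp_bracket m (act (2*m) u' x) y t + Hp_bracket m x (act (2*m) u' y) t"
      using act_deriv[OF x y] by (simp add: vadd_def)
    have e3: "act (2*m) u (Hp_bracket m x' y) t =
      Hp_bracket m (act (2*m) u x') y t + Hp_bracket m x' (act (2*m) u y) t"
      using act_deriv[OF x' y] by (simp add: vadd_def)
    have e4: "Hp_bracket m x (Phi m q y) t = Hp_bracket m x (Hp_bracket m x' y) t + Hp_bracket m x (act (2*m) u' y) t"
      unfolding Qy using Hp_bracket_add_right[OF x xy(2) xy(4)] by (simp add: vadd_def)
    have e5: "Hp_bracket m x' (Phi m p y) t = Hp_bracket m x' (Hp_bracket m x y) t + Hp_bracket m x' (act (2*m) u y) t"
      unfolding Py using Hp_bracket_add_right[OF x' xy(1) xy(3)] by (simp add: vadd_def)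
    have e6: "Hp_bracket m ?W y t = Hp_bracket m (Hp_bracket m x x') y t + Hp_bracket m (act (2*m) u x') y t
       - Hp_bracket m (act (2*m) u' x) y t"
      unfolding W1 by (simp add: vadd_def vsmult_def)
    have e7: "act (2*m) u (Phi m q y) t = act (2*m) u (Hp_bracket m x' y) t + pairing (2*m) u t * (pairing (2*m) u' t * y t)"
      unfolding Qy by (simp add: act_def vadd_def algebra_simps)
    have e8: "act (2*m) u' (Phi m p y) t = act (2*m) u' (Hp_bracket m x y) t + pairing (2*m) u' t * (pairing (2*m) u t * y t)"
      unfolding Py by (simp add: act_def vadd_def algebra_simps)
    show "Phi m (SD_bracket m p q) y t = Der_bracket m (Phi m p) (Phi m q) y t"
    proof -
      have f1: "Phi m (SD_bracket m p q) y t = Hp_bracket m ?W y t" using L by (simp add: vadd_def act_def)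
      have f2: "Der_bracket m (Phi m p) (Phi m q) y t = Phi m p (Phi m q y) t - Phi m q (Phi m p y) t"
        using RB by (simp add: vadd_def vsmult_def)
      have f3: "Phi m p (Phi m q y) t = Hp_bracket m x (Phi m q y) t + act (2*m) u (Phi m q y) t"
        using PQ by (simp add: vadd_def)
      have f4: "Phi m q (Phi m p y) t = Hp_bracket m x' (Phi m p y) t + act (2*m) u' (Phi m p y) t"
        using QP by (simp add: vadd_def)
      show ?thesis
        apply (simp only: f1 f2 f3 f4 e6 e4 e5 e7 e8)
        apply (simp only: e1 e2 e3)
        apply (simp add: algebra_simps)
        done
    qed
    qed
  qed
qed


lemma Phi_inj:
  fixes p q :: "((nat \<Rightarrow> int) \<Rightarrow> 'k::field_char_0) \<times> (nat \<Rightarrow> 'k)"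
  assumes p: "p \<in> SD_carrier m" and q: "q \<in> SD_carrier m" and eq: "Phi m p = Phi m q"
  shows "p = q"
proof -
  obtain x u where pxu: "p = (x, u)" by (cases p)
  obtain x' u' where qxu: "q = (x', u')" by (cases q)
  have x: "x \<in> Hp_carrier (2*m)" and x': "x' \<in> Hp_carrier (2*m)"
    and u: "u \<in> hvecs (2*m)" and u': "u' \<in> hvecs (2*m)"
    using p q pxu qxu by (auto simp: SD_carrier_def)
  have ev: "of_int (symp m a r) * x a + (if a = zero_vec then pairing (2*m) u r else 0) =
      of_int (symp m a r) * x' a + (if a = zero_vec then pairing (2*m) u' r else 0)"
    if "r \<in> zvecs (2*m)" "r \<noteq> zero_vec" for a r
  proof -
    have e: "Phi m (x, u) = Phi m (x', u')" using eq pxu qxu by simp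
    have A: "Phi m (x, u) (dl m r) (vec_plus a r) = of_int (symp m a r) * x a +
     (if a = zero_vec then pairing (2*m) u r else 0)"
      using Phi_eval[of "(x, u)" m r a] x that by simp
    have B: "Phi m (x', u') (dl m r) (vec_plus a r) = of_int (symp m a r) * x' a +
     (if a = zero_vec then pairing (2*m) u' r else 0)"
      using Phi_eval[of "(x', u')" m r a] x' that by simp
    show ?thesis using A B e by metis
  qed
  have "u i = u' i" for i
  proof (cases "i < 2*m")
    case True
    then show ?thesis using ev[of "uvec i" zero_vec] pairing_uvec[OF True, of u] pairing_uvec[OF True, of u']
      by auto
  next
    case False
    then show ?thesis using u u' by (simp add: hvecs_def)
  qed
  moreover have "x a = x' a" for a
  proof (cases "a \<in> zvecs (2*m) \<and> a \<noteq> zero_vec")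
    case True
    then obtain j where j: "j < 2*m" "symp m a (uvec j) \<noteq> 0" using exists_symp_uvec by blast
    then show ?thesis using ev[of "uvec j" a] True by auto
  next
    case False
    then show ?thesis using x x' by (auto simp: Hp_outside)
  qed
  ultimately show ?thesis using pxu qxu by (simp add: fun_eq_iff)
qed

section \<open>Functional equations\<close>

lemma uniq_lemma:
  fixes h :: "(nat \<Rightarrow> int) \<Rightarrow> 'k::field_char_0"
  assumes E: "\<And>r s. r \<in> zvecs (2*m) \<Longrightarrow> s \<in> zvecs (2*m) \<Longrightarrow>
      of_int (symp m r s) * h (vec_plus r s) =
      h r * of_int (symp m r s + symp m al s) + h s * of_int (symp m r s + symp m r al)"
    and rz: "rz \<in> zvecs (2*m)" "symp m al rz \<noteq> 0" "h rz = 0"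
    and s: "s \<in> zvecs (2*m)"
  shows "h s = 0"
proof -
  define a where "a = symp m al rz"
  have a0: "(of_int a :: 'k) \<noteq> 0" using rz a_def by simp
  have ra: "symp m rz al = - a" using a_def symp_antisym by metis
  have step1: "h s = 0" if "s \<in> zvecs (2*m)" "symp m rz s = 0" for s
  proof -
    have "h s * of_int (- a) = 0" using E[OF rz(1) that(1)] that(2) rz(3) ra by simp
    then show ?thesis using a0 by simp
  qed
  have rr: "vec_plus rz rz \<in> zvecs (2*m)" using rz by auto
  have h2: "h (vec_plus rz rz) = 0"
    using step1[OF rr] by (simp add: symp_add_right)
  have main: "h (vec_plus rz s) = 0" if s: "s \<in> zvecs (2*m)" "symp m rz s \<noteq> 0" for s
  proof -
    define b where "b = symp m rz s"
    have b0: "(of_int b :: 'k) \<noteq> 0" using s b_def by simp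
    have s2: "vec_plus rz s \<in> zvecs (2*m)" using s rz by auto
    define X where "X = h s"
    define Y where "Y = h (vec_plus rz s)"
    define Z where "Z = h (vec_plus rz (vec_plus rz s))"
    have R1: "of_int b * Y = X * (of_int b - of_int a)"
      using E[OF rz(1) s(1)] rz(3) ra unfolding X_def Y_def b_def by simp
    have R2: "2 * of_int b * Z = X * (2 * of_int b - 2 * of_int a)"
    proof -
      have "of_int (symp m (vec_plus rz rz) s) * h (vec_plus (vec_plus rz rz) s) =
        h s * of_int (symp m (vec_plus rz rz) s + symp m (vec_plus rz rz) al)"
        using E[OF rr s(1)] h2 by simp
      then show ?thesis unfolding X_def Z_def b_def
        by (simp add: symp_add_left ra vec_plus_assoc algebra_simps)
    qed
    have R3: "of_int b * Z = Y * (of_int b - of_int a)"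
    proof -
      have "symp m rz (vec_plus rz s) = b" unfolding b_def by (simp add: symp_add_right)
      then show ?thesis using E[OF rz(1) s2] rz(3) ra unfolding Y_def Z_def by simp
    qed
    define A where "A = (of_int a :: 'k)"
    define B where "B = (of_int b :: 'k)"
    have R1': "B * Y = X * (B - A)" using R1 unfolding A_def B_def .
    have R3': "B * Z = Y * (B - A)" using R3 unfolding A_def B_def .
    have "2 * (B * Z) = 2 * (X * (B - A))" using R2 unfolding A_def B_def
      by (simp add: right_diff_distrib mult.assoc mult.left_commute)
    then have R2': "B * Z = X * (B - A)" by simp
    have eXY: "X * (B - A) = Y * (B - A)" using R2' R3' by metis
    define K where "K = X * (B - A)"
    have "B * K = (B * Y) * (B - A)" unfolding K_def using eXY by (simp add: mult.assoc mult.left_commute)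
    also have "\<dots> = K * (B - A)" using R1' K_def by simp
    finally have "B * K = K * (B - A)" .
    then have "K * A = 0" by (simp add: algebra_simps)
    then have "K = 0" using a0 A_def by simp
    then have "B * Y = 0" using R1' K_def by simp
    then show ?thesis using b0 Y_def B_def by simp
  qed
  show ?thesis
  proof (cases "symp m rz s = 0")
    case True
    then show ?thesis using step1 s by blast
  next
    case False
    define s' where "s' = vec_plus s (vneg rz)"
    have s'z: "s' \<in> zvecs (2*m)" using s rz s'_def by auto
    have "vec_plus rz s' = s" unfolding s'_def by (simp add: vec_plus_def vneg_def)
    moreover have "symp m rz s' \<noteq> 0"
    proof -
      have "symp m rz s = symp m rz (vec_plus s' rz)" using \<open>vec_plus rz s' = s\<close> by (simp add: vec_plus_comm)
      then have "symp m rz s' = symp m rz s" by (simp add: symp_add_right)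
      then show ?thesis using False by simp
    qed
    ultimately show ?thesis using main[OF s'z] by simp
  qed
qed


lemma exists_w:
  assumes "finite S" "S \<subseteq> zvecs (2*m) - {zero_vec}"
  shows "\<exists>w\<in>zvecs (2*m). \<forall>a\<in>S. symp m a w \<noteq> 0"
  using assms
proof (induction S rule: finite_induct)
  case empty
  then show ?case by (intro bexI[of _ zero_vec]) auto
next
  case (insert a S)
  then obtain w where w: "w \<in> zvecs (2*m)" "\<forall>b\<in>S. symp m b w \<noteq> 0" by auto
  have a: "a \<in> zvecs (2*m)" "a \<noteq> zero_vec" using insert.prems by auto
  show ?case
  proof (cases "symp m a w = 0")
    case False
    then show ?thesis using w by auto
  next
    case True
    obtain j where j: "j < 2*m" "symp m a (uvec j) \<noteq> 0" using exists_symp_uvec[OF a] by blast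
    define Bad where "Bad = insert 0 (\<Union>b\<in>S. {k::int. symp m b w + k * symp m b (uvec j) = 0})"
    have fin1: "finite {k::int. symp m b w + k * symp m b (uvec j) = 0}" if "b \<in> S" for b
    proof (cases "symp m b (uvec j) = 0")
      case True
      then show ?thesis using w that by simp
    next
      case False
      have "{k::int. symp m b w + k * symp m b (uvec j) = 0} \<subseteq> {(- symp m b w) div symp m b (uvec j)}"
      proof
        fix k assume "k \<in> {k::int. symp m b w + k * symp m b (uvec j) = 0}"
        then have "k * symp m b (uvec j) = - symp m b w" by simp
        then have "k = (- symp m b w) div symp m b (uvec j)" using False
          by (metis nonzero_mult_div_cancel_right)
        then show "k \<in> {(- symp m b w) div symp m b (uvec j)}" by simp
      qed
      then show ?thesis by (rule finite_subset) simp
    qed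
    have "finite Bad" unfolding Bad_def using insert.hyps(1) fin1 by auto
    then obtain k where k: "k \<notin> Bad" using ex_new_if_finite[OF infinite_UNIV_int] by blast
    define w' where "w' = vec_plus w (vscale k (uvec j))"
    have w'z: "w' \<in> zvecs (2*m)" unfolding w'_def using w j by auto
    have sw: "symp m b w' = symp m b w + k * symp m b (uvec j)" for b
      unfolding w'_def by (simp add: symp_add_right symp_scale_right)
    have "\<forall>b\<in>insert a S. symp m b w' \<noteq> 0"
    proof
      fix b assume "b \<in> insert a S"
      then show "symp m b w' \<noteq> 0"
      proof
        assume "b = a"
        then show ?thesis using sw True j k Bad_def by auto
      next
        assume "b \<in> S"
        then show ?thesis using sw k Bad_def by auto
      qed
    qed
    then show ?thesis using w'z by blast
  qed
qed

definition vmeas :: "nat \<Rightarrow> (nat \<Rightarrow> int) \<Rightarrow> nat" where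
  "vmeas N r = (\<Sum>i<N. nat \<bar>r i\<bar>)"

lemma vmeas_less:
  assumes "j < N" "\<And>i. i \<noteq> j \<Longrightarrow> r' i = r i" "\<bar>r' j\<bar> < \<bar>r j\<bar>"
  shows "vmeas N r' < vmeas N r"
proof -
  have j: "j \<in> {..<N}" using assms(1) by simp
  have "vmeas N r' = nat \<bar>r' j\<bar> + (\<Sum>i\<in>{..<N} - {j}. nat \<bar>r' i\<bar>)"
    unfolding vmeas_def by (rule sum.remove[OF finite_lessThan j])
  also have "(\<Sum>i\<in>{..<N} - {j}. nat \<bar>r' i\<bar>) = (\<Sum>i\<in>{..<N} - {j}. nat \<bar>r i\<bar>)"
    using assms(2) by (intro sum.cong) auto
  also have "nat \<bar>r' j\<bar> + (\<Sum>i\<in>{..<N} - {j}. nat \<bar>r i\<bar>) < nat \<bar>r j\<bar> + (\<Sum>i\<in>{..<N} - {j}. nat \<bar>r i\<bar>)"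
    using assms(3) by simp
  also have "\<dots> = vmeas N r"
    unfolding vmeas_def by (rule sum.remove[OF finite_lessThan j, symmetric])
  finally show ?thesis .
qed

lemma addit_zero:
  fixes \<psi> :: "(nat \<Rightarrow> int) \<Rightarrow> 'k::field"
  assumes A: "\<And>r s. r \<in> zvecs (2*m) \<Longrightarrow> s \<in> zvecs (2*m) \<Longrightarrow> symp m r s \<noteq> 0 \<Longrightarrow>
      \<psi> (vec_plus r s) = \<psi> r + \<psi> s"
    and z: "\<psi> zero_vec = 0" and e: "\<And>j. j < 2*m \<Longrightarrow> \<psi> (uvec j) = 0"
    and r: "r \<in> zvecs (2*m)"
  shows "\<psi> r = 0"
proof -
  have full: "\<psi> (vec_plus r s) = \<psi> r + \<psi> s" if r: "r \<in> zvecs (2*m)" and s: "s \<in> zvecs (2*m)" for r s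
  proof -
    consider "r = zero_vec" | "s = zero_vec" | "r \<noteq> zero_vec" "s \<noteq> zero_vec" "vec_plus r s = zero_vec"
      | "symp m r s \<noteq> 0" | "r \<noteq> zero_vec" "s \<noteq> zero_vec" "vec_plus r s \<noteq> zero_vec" "symp m r s = 0"
      by blast
    then show ?thesis
    proof cases
      case 1 then show ?thesis using z by simp
    next
      case 2 then show ?thesis using z by simp
    next
      case 3
      obtain w where w: "w \<in> zvecs (2*m)" "symp m r w \<noteq> 0"
        using exists_w[of "{r}" m] r 3 by auto
      have srs: "symp m r s = 0" using 3 symp_sum_zero by blast
      have "symp m (vec_plus r s) w = 0" using 3 by simp
      then have ssw: "symp m s w = - symp m r w" by (simp add: symp_add_left)
      have ws: "vec_plus w s \<in> zvecs (2*m)" using w s by auto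
      have "\<psi> (vec_plus r (vec_plus w s)) = \<psi> r + \<psi> (vec_plus w s)"
        using A[OF r ws] w srs by (simp add: symp_add_right)
      moreover have "vec_plus r (vec_plus w s) = w"
        using 3 by (metis vec_plus_assoc vec_plus_comm vec_plus_zero(2))
      moreover have "\<psi> (vec_plus w s) = \<psi> w + \<psi> s"
        using A[OF w(1) s] ssw w symp_antisym[of m s w] by simp
      ultimately show ?thesis using 3 z by simp
    next
      case 4 then show ?thesis using A r s by blast
    next
      case 5
      have rs: "vec_plus r s \<in> zvecs (2*m)" using r s by auto
      obtain w where w: "w \<in> zvecs (2*m)" "symp m r w \<noteq> 0" "symp m s w \<noteq> 0" "symp m (vec_plus r s) w \<noteq> 0"
        using exists_w[of "{r, s, vec_plus r s}" m] r s rs 5 by auto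
      have sw: "vec_plus s w \<in> zvecs (2*m)" using s w by auto
      have e1: "\<psi> (vec_plus s w) = \<psi> s + \<psi> w" using A[OF s w(1) w(3)] .
      have e2: "\<psi> (vec_plus r (vec_plus s w)) = \<psi> r + \<psi> (vec_plus s w)"
        using A[OF r sw] w 5 by (simp add: symp_add_right)
      have e3: "\<psi> (vec_plus (vec_plus r s) w) = \<psi> (vec_plus r s) + \<psi> w" using A[OF rs w(1) w(4)] .
      show ?thesis using e1 e2 e3 by (simp add: vec_plus_assoc)
    qed
  qed
  have eneg: "\<psi> (vneg (uvec j)) = 0" if "j < 2*m" for j
  proof -
    have "\<psi> (vec_plus (uvec j) (vneg (uvec j))) = \<psi> (uvec j) + \<psi> (vneg (uvec j))"
      using full[OF zvecs_uvec[OF that] zvecs_neg[OF zvecs_uvec[OF that]]] .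
    then show ?thesis using z e[OF that] by (simp add: vec_plus_neg2)
  qed
  have "\<forall>r. r \<in> zvecs (2*m) \<longrightarrow> vmeas (2*m) r = n \<longrightarrow> \<psi> r = 0" for n
  proof (induction n rule: less_induct)
    case (less n)
    show ?case
    proof (intro allI impI)
      fix r assume r: "r \<in> zvecs (2*m)" and n: "vmeas (2*m) r = n"
      show "\<psi> r = 0"
      proof (cases "r = zero_vec")
        case True then show ?thesis using z by simp
      next
        case False
        then obtain j where rj: "r j \<noteq> 0" by (auto simp: zero_vec_def fun_eq_iff)
        then have j: "j < 2*m" using r by (auto simp: zvecs_def) (meson not_le)
        show ?thesis
        proof (cases "r j > 0")
          case True
          define r' where "r' = vec_plus r (vneg (uvec j))"
          have r'z: "r' \<in> zvecs (2*m)" unfolding r'_def using r j by auto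
          have rr: "r = vec_plus r' (uvec j)" unfolding r'_def by (simp add: vec_plus_def vneg_def)
          have "vmeas (2*m) r' < vmeas (2*m) r"
            using j True by (intro vmeas_less) (auto simp: r'_def vec_plus_def vneg_def uvec_def)
          then have "\<psi> r' = 0" using less n r'z by blast
          then show ?thesis using rr full[OF r'z zvecs_uvec[OF j]] e[OF j] by simp
        next
          case False
          then have neg: "r j < 0" using rj by simp
          define r' where "r' = vec_plus r (uvec j)"
          have r'z: "r' \<in> zvecs (2*m)" unfolding r'_def using r j by auto
          have rr: "r = vec_plus r' (vneg (uvec j))" unfolding r'_def by (simp add: vec_plus_def vneg_def)
          have "vmeas (2*m) r' < vmeas (2*m) r"
            using j neg by (intro vmeas_less) (auto simp: r'_def vec_plus_def uvec_def)
          then have "\<psi> r' = 0" using less n r'z by blast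
          then show ?thesis using rr full[OF r'z zvecs_neg[OF zvecs_uvec[OF j]]] eneg[OF j] by simp
        qed
      qed
    qed
  qed
  then show ?thesis using r by blast
qed


section \<open>Classification of derivations\<close>

lemma Der_lin: "D \<in> Der_Hp m \<Longrightarrow> lin m D"
  unfolding Der_Hp_def lin_def by blast

lemma Der_closed: "D \<in> Der_Hp m \<Longrightarrow> x \<in> Hp_carrier (2*m) \<Longrightarrow> D x \<in> Hp_carrier (2*m)"
  unfolding Der_Hp_def by blast

lemma Der_leib: "D \<in> Der_Hp m \<Longrightarrow> x \<in> Hp_carrier (2*m) \<Longrightarrow> y \<in> Hp_carrier (2*m) \<Longrightarrow>
  D (Hp_bracket m x y) = vadd (Hp_bracket m (D x) y) (Hp_bracket m x (D y))"
  unfolding Der_Hp_def by blast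

lemma Der_ext: "D \<in> Der_Hp m \<Longrightarrow> D \<in> extensional (Hp_carrier (2*m))"
  unfolding Der_Hp_def by blast

lemma deriv_eq:
  assumes D: "D \<in> Der_Hp m" and r: "r \<in> zvecs (2*m)" and s: "s \<in> zvecs (2*m)"
  shows "of_int (symp m r s) * D (dl m (vec_plus r s)) (vec_plus (vec_plus r s) al) =
     D (dl m r) (vec_plus r al) * of_int (symp m r s + symp m al s) +
     D (dl m s) (vec_plus s al) * of_int (symp m r s + symp m r al)"
proof -
  have lb: "D (Hp_bracket m (dl m r) (dl m s)) = vadd (Hp_bracket m (D (dl m r)) (dl m s)) (Hp_bracket m (dl m r) (D (dl m s)))"
    using Der_leib[OF D Hp_dl Hp_dl] .
  have "D (Hp_bracket m (dl m r) (dl m s)) = vsmult (of_int (symp m r s)) (D (dl m (vec_plus r s)))"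
    unfolding Hp_bracket_dl_dl[OF r s] using D Hp_dl unfolding Der_Hp_def by blast
  then have "of_int (symp m r s) * D (dl m (vec_plus r s)) (vec_plus (vec_plus r s) al) =
     Hp_bracket m (D (dl m r)) (dl m s) (vec_plus (vec_plus r s) al) +
     Hp_bracket m (dl m r) (D (dl m s)) (vec_plus (vec_plus r s) al)"
    using lb by (metis vadd_def vsmult_def)
  moreover have "vec_plus (vec_plus r s) al = vec_plus (vec_plus r al) s"
    by (simp add: vec_plus_def algebra_simps)
  moreover have "vec_plus (vec_plus r s) al = vec_plus r (vec_plus s al)"
    by (simp add: vec_plus_def algebra_simps)
  moreover have "Hp_bracket m (D (dl m r)) (dl m s) (vec_plus (vec_plus r al) s) =
      of_int (symp m (vec_plus r al) s) * D (dl m r) (vec_plus r al)"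
    by (rule Hp_bracket_dl_right[OF Der_closed[OF D Hp_dl] s])
  moreover have "Hp_bracket m (dl m r) (D (dl m s)) (vec_plus r (vec_plus s al)) =
      of_int (symp m r (vec_plus s al)) * D (dl m s) (vec_plus s al)"
    by (rule Hp_bracket_dl_left[OF Der_closed[OF D Hp_dl] r])
  ultimately show ?thesis by (simp add: symp_add_left symp_add_right algebra_simps)
qed

lemma symp_ident:
  "symp m r s * symp m al (vec_plus r s) =
   symp m al r * (symp m r s + symp m al s) + symp m al s * (symp m r s + symp m r al)"
  by (simp add: symp_add_right symp_antisym[of m r al] algebra_simps)

lemma Der_classify:
  fixes D :: "((nat \<Rightarrow> int) \<Rightarrow> 'k::field_char_0) \<Rightarrow> ((nat \<Rightarrow> int) \<Rightarrow> 'k)"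
  assumes D: "D \<in> Der_Hp m"
  shows "\<exists>p\<in>SD_carrier m. D = Phi m p"
proof -
  define u :: "nat \<Rightarrow> 'k" where "u i = (if i < 2*m then D (dl m (uvec i)) (uvec i) else 0)" for i
  define jf where "jf al = (SOME j. j < 2*m \<and> symp m al (uvec j) \<noteq> 0)" for al
  define x :: "(nat \<Rightarrow> int) \<Rightarrow> 'k" where "x al = (if al \<in> zvecs (2*m) \<and> al \<noteq> zero_vec then
      D (dl m (uvec (jf al))) (vec_plus (uvec (jf al)) al) / of_int (symp m al (uvec (jf al))) else 0)" for al
  have jf: "jf al < 2*m" "symp m al (uvec (jf al)) \<noteq> 0" if "al \<in> zvecs (2*m)" "al \<noteq> zero_vec" for al
  proof -
    have "\<exists>j. j < 2*m \<and> symp m al (uvec j) \<noteq> 0" using exists_symp_uvec[OF that] by blast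
    then have "jf al < 2*m \<and> symp m al (uvec (jf al)) \<noteq> 0" unfolding jf_def by (rule someI_ex)
    then show "jf al < 2*m" "symp m al (uvec (jf al)) \<noteq> 0" by auto
  qed
  have deg0: "D (dl m r) r = pairing (2*m) u r" if r: "r \<in> zvecs (2*m)" for r
  proof -
    define \<psi> where "\<psi> v = D (dl m v) v - pairing (2*m) u v" for v
    have "\<psi> r = 0"
    proof (rule addit_zero[OF _ _ _ r])
      fix a b assume a: "a \<in> zvecs (2*m)" and b: "b \<in> zvecs (2*m)" and ab: "symp m a b \<noteq> 0"
      have "of_int (symp m a b) * D (dl m (vec_plus a b)) (vec_plus a b) =
         of_int (symp m a b) * (D (dl m a) a + D (dl m b) b)"
        using deriv_eq[OF D a b, of zero_vec] by (simp add: algebra_simps)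
      then have "D (dl m (vec_plus a b)) (vec_plus a b) = D (dl m a) a + D (dl m b) b"
        using ab by simp
      then show "\<psi> (vec_plus a b) = \<psi> a + \<psi> b" unfolding \<psi>_def by (simp add: pairing_add)
    next
      show "\<psi> zero_vec = 0" unfolding \<psi>_def using Hp_at_zero[OF Der_closed[OF D Hp_dl[of m zero_vec]]] by simp
    next
      fix j assume j: "j < 2*m"
      show "\<psi> (uvec j) = 0" unfolding \<psi>_def using j by (simp add: pairing_uvec u_def)
    qed
    then show ?thesis unfolding \<psi>_def by simp
  qed
  have degal: "D (dl m r) (vec_plus r al) = x al * of_int (symp m al r)"
    if al: "al \<in> zvecs (2*m)" "al \<noteq> zero_vec" and r: "r \<in> zvecs (2*m)" for al r
  proof -
    define h where "h v = D (dl m v) (vec_plus v al) - x al * of_int (symp m al v)" for v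
    have "h r = 0"
    proof (rule uniq_lemma[where al = al and rz = "uvec (jf al)"])
      fix a b assume a: "a \<in> zvecs (2*m)" and b: "b \<in> zvecs (2*m)"
      have I: "(of_int (symp m a b) * of_int (symp m al (vec_plus a b)) :: 'k) =
        of_int (symp m al a) * of_int (symp m a b + symp m al b) +
        of_int (symp m al b) * of_int (symp m a b + symp m a al)"
        using arg_cong[OF symp_ident[of m a b al], of "of_int :: int \<Rightarrow> 'k"] by simp
      show "of_int (symp m a b) * h (vec_plus a b) =
        h a * of_int (symp m a b + symp m al b) + h b * of_int (symp m a b + symp m a al)"
        unfolding h_def using deriv_eq[OF D a b, of al] I
        by (simp add: algebra_simps)
    next
      show "uvec (jf al) \<in> zvecs (2*m)" using jf[OF al] by auto
      show "symp m al (uvec (jf al)) \<noteq> 0" using jf[OF al] by auto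
      show "h (uvec (jf al)) = 0" unfolding h_def x_def using al jf[OF al] by simp
    qed (use r in auto)
    then show ?thesis unfolding h_def by simp
  qed
  have xC: "x \<in> Hp_carrier (2*m)"
  proof (rule Hp_intro)
    have "{al. x al \<noteq> 0} \<subseteq> (\<Union>j<2*m. vec_plus (uvec j) -` {t. D (dl m (uvec j)) t \<noteq> 0})"
    proof
      fix al assume "al \<in> {al. x al \<noteq> 0}"
      then have al: "al \<in> zvecs (2*m)" "al \<noteq> zero_vec" and
        ne: "D (dl m (uvec (jf al))) (vec_plus (uvec (jf al)) al) \<noteq> 0"
        unfolding x_def by (auto split: if_splits)
      then show "al \<in> (\<Union>j<2*m. vec_plus (uvec j) -` {t. D (dl m (uvec j)) t \<noteq> 0})"
        using jf[OF al(1,2)] by auto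
    qed
    moreover have "finite (vec_plus (uvec j) -` {t. D (dl m (uvec j)) t \<noteq> 0})" for j
      by (rule finite_vimageI[OF Hp_finite[OF Der_closed[OF D Hp_dl]]]) (simp add: inj_def)
    ultimately show "finite {al. x al \<noteq> 0}" by (meson finite_UN_I finite_lessThan finite_subset)
  next
    fix al assume "x al \<noteq> 0"
    then show "al \<in> zvecs (2*m) \<and> al \<noteq> zero_vec" unfolding x_def by (auto split: if_splits)
  qed
  have uH: "u \<in> hvecs (2*m)" by (simp add: hvecs_def u_def)
  have pSD: "(x, u) \<in> SD_carrier m" using xC uH by (simp add: SD_carrier_def)
  have basis: "D (dl m r) = Phi m (x, u) (dl m r)" if r: "r \<in> zvecs (2*m)" "r \<noteq> zero_vec" for r
  proof (rule ext)
    fix t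
    define a where "a = vec_plus t (vneg r)"
    have t: "t = vec_plus a r" unfolding a_def by (simp add: vec_plus_neg)
    have P: "Phi m (x, u) (dl m r) (vec_plus a r) = of_int (symp m a r) * x a +
       (if a = zero_vec then pairing (2*m) u r else 0)"
      using Phi_eval[of "(x, u)" m r a] xC r by simp
    have "D (dl m r) (vec_plus a r) = of_int (symp m a r) * x a +
       (if a = zero_vec then pairing (2*m) u r else 0)"
    proof (cases "a = zero_vec")
      case True
      then show ?thesis using deg0[OF r(1)] by simp
    next
      case False
      show ?thesis
      proof (cases "a \<in> zvecs (2*m)")
        case True
        then show ?thesis using degal[OF True False r(1)] False by (simp add: vec_plus_comm)
      next
        case nz: False
        have "vec_plus a r \<notin> zvecs (2*m)" using nz r zvecs_plus_rev by blast
        then have "D (dl m r) (vec_plus a r) = 0" using Hp_outside[OF Der_closed[OF D Hp_dl]] by blast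
        moreover have "x a = 0" using nz xC Hp_outside by blast
        ultimately show ?thesis using False by simp
      qed
    qed
    then show "D (dl m r) t = Phi m (x, u) (dl m r) t" using P t by simp
  qed
  have "D = Phi m (x, u)"
  proof (rule ext)
    fix y
    show "D y = Phi m (x, u) y"
    proof (cases "y \<in> Hp_carrier (2*m)")
      case True
      show ?thesis
        by (rule lin_ext[OF Der_lin[OF D] lin_Phi basis True]) (use xC in auto)
    next
      case False
      then show ?thesis using Der_ext[OF D] by (simp add: Phi_def extensional_def)
    qed
  qed
  then show ?thesis using pSD by blast
qed


lemma lie_iso_inv:
  assumes iso: "lie_iso A addA smA brA B addB smB brB f"
    and cA: "\<forall>x\<in>A. \<forall>y\<in>A. addA x y \<in> A" "\<forall>c. \<forall>x\<in>A. smA c x \<in> A" "\<forall>x\<in>A. \<forall>y\<in>A. brA x y \<in> A"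
  shows "lie_iso B addB smB brB A addA smA brA (inv_into A f)"
proof -
  have bij: "bij_betw f A B" using iso unfolding lie_iso_def by blast
  have inj: "inj_on f A" and img: "f ` A = B" using bij by (auto simp: bij_betw_def)
  have ginA: "inv_into A f b \<in> A" if "b \<in> B" for b using that img by (metis inv_into_into)
  have fg: "f (inv_into A f b) = b" if "b \<in> B" for b using that img by (simp add: f_inv_into_f)
  have gf: "inv_into A f (f a) = a" if "a \<in> A" for a using that inj by simp
  have hadd: "\<forall>x\<in>A. \<forall>y\<in>A. f (addA x y) = addB (f x) (f y)"
    and hsm: "\<forall>c. \<forall>x\<in>A. f (smA c x) = smB c (f x)"
    and hbr: "\<forall>x\<in>A. \<forall>y\<in>A. f (brA x y) = brB (f x) (f y)"
    using iso unfolding lie_iso_def by blast+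
  show ?thesis unfolding lie_iso_def
  proof (intro conjI ballI allI)
    show "bij_betw (inv_into A f) B A" using bij by (rule bij_betw_inv_into)
  next
    fix a b assume a: "a \<in> B" and b: "b \<in> B"
    have "addB a b = f (addA (inv_into A f a) (inv_into A f b))"
      using hadd ginA[OF a] ginA[OF b] fg[OF a] fg[OF b] by simp
    then show "inv_into A f (addB a b) = addA (inv_into A f a) (inv_into A f b)"
      using gf cA(1) ginA[OF a] ginA[OF b] by simp
  next
    fix c a assume a: "a \<in> B"
    have "smB c a = f (smA c (inv_into A f a))"
      using hsm ginA[OF a] fg[OF a] by simp
    then show "inv_into A f (smB c a) = smA c (inv_into A f a)"
      using gf cA(2) ginA[OF a] by simp
  next
    fix a b assume a: "a \<in> B" and b: "b \<in> B"
    have "brB a b = f (brA (inv_into A f a) (inv_into A f b))"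
      using hbr ginA[OF a] ginA[OF b] fg[OF a] fg[OF b] by simp
    then show "inv_into A f (brB a b) = brA (inv_into A f a) (inv_into A f b)"
      using gf cA(3) ginA[OF a] ginA[OF b] by simp
  qed
qed

lemma SD_closed:
  "\<forall>p\<in>SD_carrier m. \<forall>q\<in>SD_carrier m. pair_add p q \<in> (SD_carrier m :: (((nat \<Rightarrow> int) \<Rightarrow> 'k::field) \<times> (nat \<Rightarrow> 'k)) set)"
  "\<forall>c. \<forall>p\<in>SD_carrier m. pair_smult c p \<in> (SD_carrier m :: (((nat \<Rightarrow> int) \<Rightarrow> 'k::field) \<times> (nat \<Rightarrow> 'k)) set)"
  "\<forall>p\<in>SD_carrier m. \<forall>q\<in>SD_carrier m. SD_bracket m p q \<in> (SD_carrier m :: (((nat \<Rightarrow> int) \<Rightarrow> 'k::field) \<times> (nat \<Rightarrow> 'k)) set)"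
proof -
  have h1: "vadd u v \<in> hvecs (2*m)" "vsmult c u \<in> hvecs (2*m)" "(\<lambda>_. 0) \<in> hvecs (2*m)"
    if "u \<in> hvecs (2*m)" "v \<in> hvecs (2*m)" for u v :: "nat \<Rightarrow> 'k" and c
    using that by (auto simp: hvecs_def vadd_def vsmult_def)
  show "\<forall>p\<in>SD_carrier m. \<forall>q\<in>SD_carrier m. pair_add p q \<in> (SD_carrier m :: (((nat \<Rightarrow> int) \<Rightarrow> 'k::field) \<times> (nat \<Rightarrow> 'k)) set)"
    using h1 by (auto simp: SD_carrier_def pair_add_def)
  show "\<forall>c. \<forall>p\<in>SD_carrier m. pair_smult c p \<in> (SD_carrier m :: (((nat \<Rightarrow> int) \<Rightarrow> 'k::field) \<times> (nat \<Rightarrow> 'k)) set)"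
    using h1 by (auto simp: SD_carrier_def pair_smult_def)
  show "\<forall>p\<in>SD_carrier m. \<forall>q\<in>SD_carrier m. SD_bracket m p q \<in> (SD_carrier m :: (((nat \<Rightarrow> int) \<Rightarrow> 'k::field) \<times> (nat \<Rightarrow> 'k)) set)"
    using h1 by (auto simp: SD_carrier_def SD_bracket_def semidirect_bracket_def hvecs_def)
qed

lemma Phi_lie_iso:
  "lie_iso (SD_carrier m :: (((nat \<Rightarrow> int) \<Rightarrow> 'k::field_char_0) \<times> (nat \<Rightarrow> 'k)) set) pair_add pair_smult (SD_bracket m)
     (Der_Hp m) (Der_add m) (Der_smult m) (Der_bracket m) (Phi m)"
  unfolding lie_iso_def
proof (intro conjI ballI allI)
  show "bij_betw (Phi m) (SD_carrier m :: (((nat \<Rightarrow> int) \<Rightarrow> 'k) \<times> (nat \<Rightarrow> 'k)) set) (Der_Hp m)"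
    unfolding bij_betw_def
  proof
    show "inj_on (Phi m) (SD_carrier m :: (((nat \<Rightarrow> int) \<Rightarrow> 'k) \<times> (nat \<Rightarrow> 'k)) set)"
      using Phi_inj by (metis inj_onI)
    show "Phi m ` (SD_carrier m :: (((nat \<Rightarrow> int) \<Rightarrow> 'k) \<times> (nat \<Rightarrow> 'k)) set) = Der_Hp m"
      using Phi_in_Der Der_classify by blast
  qed
qed (auto simp: Phi_add Phi_smult Phi_bracket)

lemma SD_Ham_iso:
  "lie_iso (SD_carrier m :: (((nat \<Rightarrow> int) \<Rightarrow> 'k::field) \<times> (nat \<Rightarrow> 'k)) set)
     pair_add pair_smult (SD_bracket m) (Ham_carrier m) pair_add pair_smult (Ham_bracket m) id"
proof -
  have "SD_bracket m p q = Ham_bracket m p q" for p q :: "((nat \<Rightarrow> int) \<Rightarrow> 'k) \<times> (nat \<Rightarrow> 'k)"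
    by (simp add: SD_bracket_def Ham_bracket_def semidirect_bracket_def vadd_def vsmult_def act_def
        fun_eq_iff algebra_simps)
  then show ?thesis unfolding lie_iso_def
    by (simp add: SD_carrier_def Ham_carrier_def bij_betw_def)
qed

theorem theorem4p5:
  fixes m :: nat
  assumes "alg_closed TYPE('k::field_char_0)"
    and "m \<ge> 1"
  shows "(\<exists>\<phi>. lie_iso (Der_Hp m :: (((nat \<Rightarrow> int) \<Rightarrow> 'k) \<Rightarrow> ((nat \<Rightarrow> int) \<Rightarrow> 'k)) set)
                  (Der_add m) (Der_smult m) (Der_bracket m)
                  (SD_carrier m) pair_add pair_smult (SD_bracket m) \<phi>)
       \<and> (\<exists>\<psi>. lie_iso (SD_carrier m :: (((nat \<Rightarrow> int) \<Rightarrow> 'k) \<times> (nat \<Rightarrow> 'k)) set)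
                  pair_add pair_smult (SD_bracket m)
                  (Ham_carrier m) pair_add pair_smult (Ham_bracket m) \<psi>)"
proof
  show "\<exists>\<phi>. lie_iso (Der_Hp m :: (((nat \<Rightarrow> int) \<Rightarrow> 'k) \<Rightarrow> ((nat \<Rightarrow> int) \<Rightarrow> 'k)) set)
                  (Der_add m) (Der_smult m) (Der_bracket m)
                  (SD_carrier m) pair_add pair_smult (SD_bracket m) \<phi>"
    using lie_iso_inv[OF Phi_lie_iso SD_closed] by blast
  show "\<exists>\<psi>. lie_iso (SD_carrier m :: (((nat \<Rightarrow> int) \<Rightarrow> 'k) \<times> (nat \<Rightarrow> 'k)) set)
                  pair_add pair_smult (SD_bracket m)
                  (Ham_carrier m) pair_add pair_smult (Ham_bracket m) \<psi>"
    using SD_Ham_iso by blast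
qed

end
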